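(* Let $d=1$, $1\le\alpha<2$ and $0<t_0\le1$. Let $Y_t$ be a symmetric Lévy process in $\mathbb{R}$ with triplet $(0,\nu^Y,0)$ and transition density $p^Y(t,x)$, and suppose $\sigma=\tilde\nu-\nu^Y$ is a finite signed measure; set $m=\sigma(\mathbb{R})$, $M=|\sigma|(\mathbb{R})$. Then there is a constant $C=C(m,M)$ (depending also on $\alpha$) such that for all $x\in\mathbb{R}$ \[\int_0^{t_0}\big|\tilde p(t,x)-e^{-2mt}p^Y(t,x)\big|\,dt\le C\,t_0^{2-1/\alpha}.\]
   Context: $\tilde p(t,x)$ is the transition density and $\tilde\nu(dx)=\mathscr{A}(-\alpha,1)|x|^{-1-\alpha}dx$ the Lévy measure of the symmetric $\alpha$-stable process on $\mathbb{R}$ (characteristic function $e^{-t|z|^\alpha}$), $\mathscr{A}(\rho,d)=\frac{\Gamma((d-\rho)/2)}{\pi^{d/2}2^{\rho}|\Gamma(\rho/2)|}$. *)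

theory Defs
  imports "HOL-Analysis.Analysis"
begin

definition calA :: "real \<Rightarrow> real \<Rightarrow> real" where
  "calA rho d = Gamma ((d - rho) / 2) / (pi powr (d / 2) * 2 powr rho * \<bar>Gamma (rho / 2)\<bar>)"

definition stable_levy_measure :: "real \<Rightarrow> real measure" where
  "stable_levy_measure a =
     density lborel (\<lambda>x. ennreal (if x = 0 then 0 else calA (- a) 1 * \<bar>x\<bar> powr (- 1 - a)))"

definition is_levy_measure :: "real measure \<Rightarrow> bool" where
  "is_levy_measure \<nu> \<longleftrightarrow> sets \<nu> = sets borel \<and> emeasure \<nu> {0} = 0 \<and>
     (\<integral>\<^sup>+ x. ennreal (min 1 (x\<^sup>2)) \<partial>\<nu>) < \<infinity>"

definition symmetric_measure :: "real measure \<Rightarrow> bool" where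
  "symmetric_measure \<nu> \<longleftrightarrow> (\<forall>A\<in>sets borel. emeasure \<nu> (uminus ` A) = emeasure \<nu> A)"

text \<open>Levy-Khintchine exponent for the triplet (0, nu, 0) (truncation 1_{|x|<1}):
  psi(z) = int (1 - e^{izx} + i z x 1_{|x|<1}) nu(dx), so that E e^{izY_t} = e^{-t psi(z)}.\<close>
definition levy_exponent :: "real measure \<Rightarrow> real \<Rightarrow> complex" where
  "levy_exponent \<nu> z =
     (\<integral>x. (1 - cis (z * x) + \<i> * complex_of_real (z * x * indicator {-1<..<1} x)) \<partial>\<nu>)"

text \<open>p is the (continuous version of the) transition density of a Levy process on R whose
  characteristic function at time t is exp(-t psi(z)): for every t > 0, p t is a nonnegative,
  continuous, Lebesgue integrable function with Fourier transform exp(-t psi).\<close>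
definition is_transition_density :: "(real \<Rightarrow> complex) \<Rightarrow> (real \<Rightarrow> real \<Rightarrow> real) \<Rightarrow> bool" where
  "is_transition_density \<psi> p \<longleftrightarrow>
     (\<forall>t>0. (\<forall>x. p t x \<ge> 0) \<and> continuous_on UNIV (p t) \<and> integrable lborel (p t) \<and>
        (\<forall>z. (\<integral>x. cis (z * x) * complex_of_real (p t x) \<partial>lborel) = exp (- complex_of_real t * \<psi> z)))"

end

theory Submission
  imports Defs "HOL-Probability.Probability"
begin

lemma borel_measurable_cis' [measurable (raw)]:
  assumes "f \<in> borel_measurable M" shows "(\<lambda>x. cis (f x)) \<in> borel_measurable M"
proof -
  have "(\<lambda>x. cis x) \<in> borel_measurable borel"
    by (rule borel_measurable_continuous_onI) (intro continuous_on_cis continuous_on_id)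
  from measurable_compose[OF assms this] show ?thesis .
qed
lemma borel_measurable_cor' [measurable (raw)]:
  assumes "f \<in> borel_measurable M" shows "(\<lambda>x. complex_of_real (f x)) \<in> borel_measurable M"
proof -
  have "(\<lambda>x. complex_of_real x) \<in> borel_measurable borel"
    by (rule borel_measurable_continuous_onI) (intro continuous_intros)
  from measurable_compose[OF assms this] show ?thesis .
qed

lemma nn_integral_four_meas:
  fixes M1 M2 M3 M4 :: "real measure"
  assumes s1: "sets M1 = sets borel" and s2: "sets M2 = sets borel"
    and s3: "sets M3 = sets borel" and s4: "sets M4 = sets borel"
    and eq: "\<forall>A\<in>sets borel. emeasure M1 A + emeasure M2 A = emeasure M3 A + emeasure M4 A"
    and u: "u \<in> borel_measurable borel"
  shows "(\<integral>\<^sup>+x. u x \<partial>M1) + (\<integral>\<^sup>+x. u x \<partial>M2) = (\<integral>\<^sup>+x. u x \<partial>M3) + (\<integral>\<^sup>+x. u x \<partial>M4)"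
  using u
proof (induct rule: borel_measurable_induct)
  case (cong f g)
  have "f = g" using cong(3) by auto
  then show ?case using cong by simp
next
  case (set A)
  have "(\<integral>\<^sup>+x. indicator A x \<partial>M1) = emeasure M1 A" "(\<integral>\<^sup>+x. indicator A x \<partial>M2) = emeasure M2 A"
    "(\<integral>\<^sup>+x. indicator A x \<partial>M3) = emeasure M3 A" "(\<integral>\<^sup>+x. indicator A x \<partial>M4) = emeasure M4 A"
    using set s1 s2 s3 s4 by (metis nn_integral_indicator sets_borel)+
  then show ?case using eq set by simp
next
  case (mult u c)
  have m: "u \<in> borel_measurable M1" "u \<in> borel_measurable M2" "u \<in> borel_measurable M3" "u \<in> borel_measurable M4"
    unfolding measurable_cong_sets[OF s1 refl] measurable_cong_sets[OF s2 refl] measurable_cong_sets[OF s3 refl] measurable_cong_sets[OF s4 refl] using mult(2) by auto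
  have "(\<integral>\<^sup>+x. c * u x \<partial>M1) + (\<integral>\<^sup>+x. c * u x \<partial>M2) = c * ((\<integral>\<^sup>+x. u x \<partial>M1) + (\<integral>\<^sup>+x. u x \<partial>M2))"
    by (simp only: nn_integral_cmult m distrib_left)
  also have "\<dots> = c * ((\<integral>\<^sup>+x. u x \<partial>M3) + (\<integral>\<^sup>+x. u x \<partial>M4))" using mult(4) by simp
  also have "\<dots> = (\<integral>\<^sup>+x. c * u x \<partial>M3) + (\<integral>\<^sup>+x. c * u x \<partial>M4)"
    by (simp only: nn_integral_cmult m distrib_left)
  finally show ?case .
next
  case (add u v)
  have m: "u \<in> borel_measurable M1" "u \<in> borel_measurable M2" "u \<in> borel_measurable M3" "u \<in> borel_measurable M4"
     "v \<in> borel_measurable M1" "v \<in> borel_measurable M2" "v \<in> borel_measurable M3" "v \<in> borel_measurable M4"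
    unfolding measurable_cong_sets[OF s1 refl] measurable_cong_sets[OF s2 refl] measurable_cong_sets[OF s3 refl] measurable_cong_sets[OF s4 refl] using add(1,4) by auto
  have "(\<integral>\<^sup>+x. v x + u x \<partial>M1) + (\<integral>\<^sup>+x. v x + u x \<partial>M2)
      = ((\<integral>\<^sup>+x. v x \<partial>M1) + (\<integral>\<^sup>+x. v x \<partial>M2)) + ((\<integral>\<^sup>+x. u x \<partial>M1) + (\<integral>\<^sup>+x. u x \<partial>M2))"
    by (simp only: nn_integral_add m ac_simps)
  also have "\<dots> = ((\<integral>\<^sup>+x. v x \<partial>M3) + (\<integral>\<^sup>+x. v x \<partial>M4)) + ((\<integral>\<^sup>+x. u x \<partial>M3) + (\<integral>\<^sup>+x. u x \<partial>M4))"
    using add(3,7) by simp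
  also have "\<dots> = (\<integral>\<^sup>+x. v x + u x \<partial>M3) + (\<integral>\<^sup>+x. v x + u x \<partial>M4)"
    by (simp only: nn_integral_add m ac_simps)
  finally show ?case .
next
  case (seq U)
  have m: "\<And>i. U i \<in> borel_measurable M1" "\<And>i. U i \<in> borel_measurable M2"
     "\<And>i. U i \<in> borel_measurable M3" "\<And>i. U i \<in> borel_measurable M4"
    unfolding measurable_cong_sets[OF s1 refl] measurable_cong_sets[OF s2 refl] measurable_cong_sets[OF s3 refl] measurable_cong_sets[OF s4 refl] using seq(1) by auto
  have inc: "incseq (\<lambda>i. \<integral>\<^sup>+x. U i x \<partial>N)" for N :: "real measure"
    using seq(4) by (auto simp: incseq_def le_fun_def intro!: nn_integral_mono)
  have SUPeq: "(\<integral>\<^sup>+x. (SUP i. U i) x \<partial>N) = (SUP i. \<integral>\<^sup>+x. U i x \<partial>N)" 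
    if "\<And>i. U i \<in> borel_measurable N" for N :: "real measure"
    using nn_integral_monotone_convergence_SUP[OF seq(4) that] by (simp add: image_comp)
  have "(\<integral>\<^sup>+x. (SUP i. U i) x \<partial>M1) + (\<integral>\<^sup>+x. (SUP i. U i) x \<partial>M2)
     = (SUP i. (\<integral>\<^sup>+x. U i x \<partial>M1) + (\<integral>\<^sup>+x. U i x \<partial>M2))"
    by (simp only: SUPeq m ennreal_SUP_add[OF inc inc])
  also have "\<dots> = (SUP i. (\<integral>\<^sup>+x. U i x \<partial>M3) + (\<integral>\<^sup>+x. U i x \<partial>M4))"
    using seq(3) by simp
  also have "\<dots> = (\<integral>\<^sup>+x. (SUP i. U i) x \<partial>M3) + (\<integral>\<^sup>+x. (SUP i. U i) x \<partial>M4)"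
    by (simp only: SUPeq m ennreal_SUP_add[OF inc inc])
  finally show ?case .
qed

lemma gamma_scaled:
  fixes a b :: real assumes a: "a > 0" and b: "b > 0"
  shows "(\<integral>\<^sup>+r. ennreal (indicator {0..} r * r powr (a-1) * exp (-(b*r))) \<partial>lborel)
        = ennreal (Gamma a * b powr (-a))"
proof -
  define F where "F = (\<lambda>r::real. ennreal (indicator {0..} r * r powr (a-1) * exp (-(b*r))))"
  have "(\<integral>\<^sup>+r. F r \<partial>lborel) = ennreal \<bar>1/b\<bar> * (\<integral>\<^sup>+x. F (0 + 1/b * x) \<partial>lborel)"
    by (rule nn_integral_real_affine) (use b in \<open>auto simp: F_def\<close>)
  also have "(\<lambda>x. F (0 + 1/b * x)) = (\<lambda>x. ennreal (b powr (1-a)) * ennreal (indicator {0..} x * x powr (a-1) / exp x))"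
  proof
    fix x :: real
    show "F (0 + 1/b * x) = ennreal (b powr (1-a)) * ennreal (indicator {0..} x * x powr (a-1) / exp x)"
    proof (cases "x \<ge> 0")
      case True
      have "(x/b) powr (a-1) = x powr (a-1) / b powr (a-1)" using True b by (simp add: powr_divide)
      also have "\<dots> = b powr (1-a) * x powr (a-1)" using b by (simp add: powr_minus_divide[symmetric] powr_diff mult_ac)
      finally have e: "(x/b) powr (a-1) = b powr (1-a) * x powr (a-1)" .
      show ?thesis using True b
        by (simp add: F_def e ennreal_mult'[symmetric] exp_minus field_simps)
    next
      case False
      then show ?thesis using b by (simp add: F_def indicator_def zero_le_divide_iff)
    qed
  qed
  also have "(\<integral>\<^sup>+x. ennreal (b powr (1-a)) * ennreal (indicator {0..} x * x powr (a-1) / exp x) \<partial>lborel)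
     = ennreal (b powr (1-a)) * ennreal (Gamma a)"
    by (subst nn_integral_cmult) (auto simp: Gamma_conv_nn_integral_real[OF a])
  finally have "(\<integral>\<^sup>+r. F r \<partial>lborel) = ennreal (1/b * (b powr (1-a) * Gamma a))"
    using b a Gamma_real_pos[OF a] by (simp add: ennreal_mult'[symmetric] mult.assoc)
  also have "1/b * (b powr (1-a) * Gamma a) = Gamma a * b powr (-a)"
    using b by (simp add: powr_diff field_simps powr_minus)
  finally show ?thesis by (simp add: F_def)
qed

lemma gauss_ft:
  fixes t :: real
  shows "(\<integral>x. cis (t*x) * complex_of_real (exp (-(x^2)/2)) \<partial>lborel)
       = complex_of_real (sqrt (2*pi) * exp (-(t^2)/2))"
proof -
  have "char std_normal_distribution t = (\<integral>x. std_normal_density x *\<^sub>R iexp (t*x) \<partial>lborel)"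
    unfolding char_def by (rule integral_density) auto
  hence 1: "(\<integral>x. std_normal_density x *\<^sub>R iexp (t*x) \<partial>lborel) = complex_of_real (exp (-(t^2)/2))"
    using char_std_normal_distribution by simp
  have eq: "(\<lambda>x. cis (t*x) * complex_of_real (exp (-(x^2)/2))) = (\<lambda>x. sqrt (2*pi) *\<^sub>R (std_normal_density x *\<^sub>R iexp (t*x)))"
    by (auto simp: std_normal_density_def cis_conv_exp scaleR_conv_of_real)
  have "(\<integral>x. cis (t*x) * complex_of_real (exp (-(x^2)/2)) \<partial>lborel) = sqrt (2*pi) *\<^sub>R complex_of_real (exp (-(t^2)/2))"
    unfolding eq integral_scaleR_right 1 ..
  thus ?thesis by (simp add: scaleR_conv_of_real)
qed

lemma gauss_integrable:
  fixes e :: real assumes e: "e > 0"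
  shows "integrable lborel (\<lambda>z. exp (-((e*z)^2)/2))"
proof -
  have "integrable lborel (\<lambda>x. sqrt (2*pi) * std_normal_density x)"
    by (intro integrable_mult_right) auto
  hence "integrable lborel (\<lambda>x. exp (-((x::real)^2)/2))"
    by (simp add: std_normal_density_def)
  from lborel_integrable_real_affine[OF this, of e 0] e show ?thesis by simp
qed

lemma gauss_ft_scaled:
  fixes e u :: real assumes e: "e > 0"
  shows "(\<integral>z. cis (z*u) * complex_of_real (exp (-((e*z)^2)/2)) \<partial>lborel)
       = complex_of_real (sqrt (2*pi) / e * exp (-((u/e)^2)/2))"
proof -
  have "(\<integral>z. cis (z*u) * complex_of_real (exp (-((e*z)^2)/2)) \<partial>lborel)
      = \<bar>1/e\<bar> *\<^sub>R (\<integral>x. cis ((0 + 1/e*x)*u) * complex_of_real (exp (-((e*(0 + 1/e*x))^2)/2)) \<partial>lborel)"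
    by (rule lborel_integral_real_affine) (use e in auto)
  also have "(\<lambda>x. cis ((0 + 1/e*x)*u) * complex_of_real (exp (-((e*(0 + 1/e*x))^2)/2)))
      = (\<lambda>x. cis ((u/e)*x) * complex_of_real (exp (-(x^2)/2)))"
    using e by (auto simp: field_simps)
  also have "(\<integral>x. cis ((u/e)*x) * complex_of_real (exp (-(x^2)/2)) \<partial>lborel)
      = complex_of_real (sqrt (2*pi) * exp (-((u/e)^2)/2))" by (rule gauss_ft)
  finally show ?thesis using e by (simp add: scaleR_conv_of_real)
qed

lemma gauss_cos_integral:
  fixes r :: real assumes r: "r > 0"
  shows "integrable lborel (\<lambda>z. cos z * exp (-(r*z^2)))"
    and "(\<integral>z. cos z * exp (-(r*z^2)) \<partial>lborel) = sqrt (pi/r) * exp (-(1/(4*r)))"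
    and "integrable lborel (\<lambda>z. exp (-(r*z^2)))"
    and "(\<integral>z. exp (-(r*z^2)) \<partial>lborel) = sqrt (pi/r)"
proof -
  define e where "e = sqrt (2*r)"
  have e: "e > 0" using r by (simp add: e_def)
  have ee: "(e*z)^2/2 = r*z^2" for z using r by (simp add: e_def power_mult_distrib)
  have int: "integrable lborel (\<lambda>z. exp (-(r*z^2)))"
    using gauss_integrable[OF e] by (simp add: ee)
  show "integrable lborel (\<lambda>z. exp (-(r*z^2)))" by (fact int)
  have intc: "integrable lborel (\<lambda>z. cis (z*u) * complex_of_real (exp (-((e*z)^2)/2)))" for u
  proof (rule Bochner_Integration.integrable_bound[of _ "\<lambda>z. complex_of_real (exp (-(r*z^2)))"])
    show "integrable lborel (\<lambda>z. complex_of_real (exp (-(r*z^2))))" using int by simp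
    show "(\<lambda>z. cis (z*u) * complex_of_real (exp (-((e*z)^2)/2))) \<in> borel_measurable lborel" by measurable
  qed (auto simp: ee norm_mult)
  show "integrable lborel (\<lambda>z. cos z * exp (-(r*z^2)))"
    by (rule Bochner_Integration.integrable_bound[OF int]) (auto simp: abs_mult)
  have "(\<integral>z. Re (cis (z*1) * complex_of_real (exp (-((e*z)^2)/2))) \<partial>lborel)
       = Re (\<integral>z. cis (z*1) * complex_of_real (exp (-((e*z)^2)/2)) \<partial>lborel)"
    by (rule integral_Re[OF intc])
  also have "\<dots> = sqrt (2*pi) / e * exp (-((1/e)^2)/2)" using gauss_ft_scaled[OF e, of 1] gauss_ft_scaled[OF e, of 0] by simp
  also have "\<dots> = sqrt (pi/r) * exp (-(1/(4*r)))"
    using r by (simp add: e_def real_sqrt_divide power_divide real_sqrt_mult field_simps)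
  finally show "(\<integral>z. cos z * exp (-(r*z^2)) \<partial>lborel) = sqrt (pi/r) * exp (-(1/(4*r)))"
    by (simp add: ee)
  have "(\<integral>z. Re (cis (z*0) * complex_of_real (exp (-((e*z)^2)/2))) \<partial>lborel)
       = Re (\<integral>z. cis (z*0) * complex_of_real (exp (-((e*z)^2)/2)) \<partial>lborel)"
    by (rule integral_Re[OF intc])
  also have "\<dots> = sqrt (2*pi) / e" using gauss_ft_scaled[OF e, of 1] gauss_ft_scaled[OF e, of 0] by simp
  also have "\<dots> = sqrt (pi/r)"
    using r by (simp add: e_def real_sqrt_divide real_sqrt_mult field_simps)
  finally show "(\<integral>z. exp (-(r*z^2)) \<partial>lborel) = sqrt (pi/r)"
    by (simp add: ee)
qed

lemma nn_one_minus_cos_gauss: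
  fixes r :: real assumes r: "r > 0"
  shows "(\<integral>\<^sup>+u. ennreal ((1 - cos u) * exp (-(r*u^2))) \<partial>lborel) = ennreal (sqrt (pi/r) * (1 - exp (-(1/(4*r)))))"
proof -
  have i: "integrable lborel (\<lambda>u. exp (-(r*u^2)) - cos u * exp (-(r*u^2)))"
    using gauss_cos_integral[OF r] by (intro Bochner_Integration.integrable_diff) auto
  have "(\<integral>\<^sup>+u. ennreal ((1 - cos u) * exp (-(r*u^2))) \<partial>lborel)
      = (\<integral>\<^sup>+u. ennreal (exp (-(r*u^2)) - cos u * exp (-(r*u^2))) \<partial>lborel)"
    by (simp add: algebra_simps)
  also have "\<dots> = ennreal (\<integral>u. exp (-(r*u^2)) - cos u * exp (-(r*u^2)) \<partial>lborel)"
    by (rule nn_integral_eq_integral[OF i]) (auto simp: algebra_simps)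
  also have "(\<integral>u. exp (-(r*u^2)) - cos u * exp (-(r*u^2)) \<partial>lborel) = sqrt (pi/r) - sqrt (pi/r) * exp (-(1/(4*r)))"
    using gauss_cos_integral[OF r] by (subst Bochner_Integration.integral_diff) auto
  finally show ?thesis by (simp add: algebra_simps)
qed

lemma nn_exp_interval:
  fixes c :: real assumes c: "c \<ge> 0"
  shows "(\<integral>\<^sup>+w. ennreal (indicator {0..c} w * exp (-w)) \<partial>lborel) = ennreal (1 - exp (-c))"
proof -
  have "((\<lambda>w. exp (-w)) has_integral ((- exp (-c)) - (- exp (-0)))) {0..c}"
    by (rule fundamental_theorem_of_calculus[OF c])
       (auto intro!: derivative_eq_intros simp: has_real_derivative_iff_has_vector_derivative[symmetric])
  hence "((\<lambda>w. exp (-w)) has_integral (1 - exp (-c))) {0..c}" by simp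
  from nn_integral_has_integral_lebesgue[OF _ this] show ?thesis by simp
qed

lemma nn_powr_interval:
  fixes c b :: real assumes c: "c \<ge> 0" and b: "b > 0"
  shows "(\<integral>\<^sup>+r. ennreal (indicator {0..c} r * r powr (b-1)) \<partial>lborel) = ennreal (c powr b / b)"
proof -
  have "((\<lambda>r. r powr (b-1)) has_integral (c powr (b-1+1) / (b-1+1))) {0..c}"
    by (rule has_integral_powr_from_0) (use b c in auto)
  hence "((\<lambda>r. r powr (b-1)) has_integral (c powr b / b)) {0..c}" by simp
  from nn_integral_has_integral_lebesgue[OF _ this] show ?thesis by simp
qed

lemma nn_K_integral:
  fixes b :: real assumes b0: "0 < b" and b1: "b < 1"
  shows "(\<integral>\<^sup>+r. ennreal (indicator {0<..} r * r powr (b-1) * (1 - exp (-(1/(4*r))))) \<partial>lborel)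
       = ennreal (4 powr (-b) / b * Gamma (1-b))"
proof -
  define H where "H = (\<lambda>r w::real. ennreal (if 0 < r \<and> 0 \<le> w \<and> 4*r*w \<le> 1 then r powr (b-1) * exp (-w) else 0))"
  have Hm: "(\<lambda>(r,w). H r w) \<in> borel_measurable (lborel \<Otimes>\<^sub>M lborel)"
    unfolding H_def by measurable
  have step1: "ennreal (indicator {0<..} r * r powr (b-1) * (1 - exp (-(1/(4*r))))) = (\<integral>\<^sup>+w. H r w \<partial>lborel)" for r
  proof (cases "r > 0")
    case True
    have "(\<integral>\<^sup>+w. H r w \<partial>lborel) = (\<integral>\<^sup>+w. ennreal (r powr (b-1)) * ennreal (indicator {0..1/(4*r)} w * exp (-w)) \<partial>lborel)"
      using True by (intro nn_integral_cong) (auto simp: H_def indicator_def ennreal_mult'[symmetric] field_simps)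
    also have "\<dots> = ennreal (r powr (b-1)) * ennreal (1 - exp (-(1/(4*r))))"
      using True by (subst nn_integral_cmult) (auto simp: nn_exp_interval)
    finally show ?thesis using True by (simp add: ennreal_mult'[symmetric])
  next
    case False
    then show ?thesis by (simp add: H_def)
  qed
  have step2: "(\<integral>\<^sup>+r. H r w \<partial>lborel) = ennreal (indicator {0<..} w * 4 powr (-b) / b * (w powr (-b) / exp w))" if w: "w \<noteq> 0" for w
  proof (cases "w > 0")
    case True
    have "(\<integral>\<^sup>+r. H r w \<partial>lborel) = (\<integral>\<^sup>+r. ennreal (exp (-w)) * ennreal (indicator {0..1/(4*w)} r * r powr (b-1)) \<partial>lborel)"
      using True by (intro nn_integral_cong) (auto simp: H_def indicator_def ennreal_mult'[symmetric] field_simps)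
    also have "\<dots> = ennreal (exp (-w)) * ennreal ((1/(4*w)) powr b / b)"
      using True b0 by (subst nn_integral_cmult) (auto simp: nn_powr_interval)
    also have "(1/(4*w)) powr b = 4 powr (-b) * w powr (-b)"
      using True by (simp add: powr_divide powr_mult powr_minus_divide)
    finally show ?thesis using True b0 by (simp add: ennreal_mult'[symmetric] exp_minus field_simps)
  next
    case False
    then have "w < 0" using w by simp
    then show ?thesis by (simp add: H_def)
  qed
  have "(\<integral>\<^sup>+r. ennreal (indicator {0<..} r * r powr (b-1) * (1 - exp (-(1/(4*r))))) \<partial>lborel)
      = (\<integral>\<^sup>+r. \<integral>\<^sup>+w. H r w \<partial>lborel \<partial>lborel)"
    by (simp add: step1)
  also have "\<dots> = (\<integral>\<^sup>+w. \<integral>\<^sup>+r. H r w \<partial>lborel \<partial>lborel)"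
    using lborel_pair.Fubini'[OF Hm] by simp
  also have "\<dots> = (\<integral>\<^sup>+w. ennreal (4 powr (-b) / b) * ennreal (indicator {0..} w * w powr ((1-b) - 1) / exp w) \<partial>lborel)"
  proof (rule nn_integral_cong_AE)
    show "AE w in lborel. (\<integral>\<^sup>+r. H r w \<partial>lborel) = ennreal (4 powr (-b) / b) * ennreal (indicator {0..} w * w powr ((1-b) - 1) / exp w)"
      using AE_lborel_singleton[of 0]
    proof eventually_elim
      case (elim w)
      then show ?case using b0 by (simp add: step2 ennreal_mult'[symmetric] indicator_def)
    qed
  qed
  also have "\<dots> = ennreal (4 powr (-b) / b) * ennreal (Gamma (1-b))"
    using b1 by (subst nn_integral_cmult) (auto simp: Gamma_conv_nn_integral_real)
  also have "\<dots> = ennreal (4 powr (-b) / b * Gamma (1-b))"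
    using b0 b1 by (simp add: ennreal_mult'[symmetric])
  finally show ?thesis .
qed

lemma nn_I_full:
  fixes \<alpha> :: real assumes a0: "0 < \<alpha>" and a2: "\<alpha> < 2"
  shows "(\<integral>\<^sup>+u. ennreal ((1 - cos u) * \<bar>u\<bar> powr (-1-\<alpha>)) \<partial>lborel)
       = ennreal (sqrt pi * (4 powr (-(\<alpha>/2)) / (\<alpha>/2) * Gamma (1-\<alpha>/2)) / Gamma ((1+\<alpha>)/2))"
proof -
  define a where "a = (1+\<alpha>)/2"
  have a: "a > 0" using a0 by (simp add: a_def)
  have Ga: "Gamma a > 0" using Gamma_real_pos[OF a] .
  define H where "H = (\<lambda>u r::real. ennreal ((1 - cos u) * (indicator {0..} r * r powr (a-1) * exp (-((u^2)*r))) / Gamma a))"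
  have Hm: "(\<lambda>(u,r). H u r) \<in> borel_measurable (lborel \<Otimes>\<^sub>M lborel)"
    unfolding H_def by measurable
  have step1: "ennreal ((1 - cos u) * \<bar>u\<bar> powr (-1-\<alpha>)) = (\<integral>\<^sup>+r. H u r \<partial>lborel)" for u
  proof (cases "u = 0")
    case False
    have u2: "u^2 > 0" using False by simp
    have "(\<integral>\<^sup>+r. H u r \<partial>lborel) = (\<integral>\<^sup>+r. ennreal ((1 - cos u) / Gamma a) * ennreal (indicator {0..} r * r powr (a-1) * exp (-((u^2)*r))) \<partial>lborel)"
      using Ga by (intro nn_integral_cong) (auto simp: H_def ennreal_mult'[symmetric] indicator_def)
    also have "\<dots> = ennreal ((1 - cos u) / Gamma a) * ennreal (Gamma a * (u^2) powr (-a))"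
      by (subst nn_integral_cmult) (auto simp: gamma_scaled[OF a u2])
    also have "(u^2) powr (-a) = \<bar>u\<bar> powr (-1-\<alpha>)"
    proof -
      have "(u^2) powr (-a) = (\<bar>u\<bar> powr 2) powr (-a)" by simp
      also have "\<dots> = \<bar>u\<bar> powr (2 * -a)" by (rule powr_powr)
      also have "2 * -a = -1-\<alpha>" by (simp add: a_def field_simps)
      finally show ?thesis .
    qed
    finally show ?thesis using Ga by (simp add: ennreal_mult'[symmetric])
  next
    case True
    then show ?thesis by (simp add: H_def)
  qed
  have step2: "(\<integral>\<^sup>+u. H u r \<partial>lborel) = ennreal (sqrt pi / Gamma a) * ennreal (indicator {0<..} r * r powr (\<alpha>/2-1) * (1 - exp (-(1/(4*r)))))" 
    if r: "r \<noteq> 0" for r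
  proof (cases "r > 0")
    case True
    have E: "r powr (a-1) * sqrt (pi/r) = sqrt pi * r powr (\<alpha>/2-1)"
    proof -
      have "sqrt (pi/r) = sqrt pi * r powr (-1/2)"
        using True by (simp add: real_sqrt_divide powr_minus_divide powr_half_sqrt[symmetric] divide_simps)
      hence "r powr (a-1) * sqrt (pi/r) = sqrt pi * (r powr (a-1) * r powr (-1/2))" by simp
      also have "r powr (a-1) * r powr (-1/2) = r powr (\<alpha>/2-1)"
      proof -
        have "a - 1 + -1/2 = \<alpha>/2 - 1" by (simp add: a_def field_simps)
        thus ?thesis by (simp only: powr_add[symmetric])
      qed
      finally show ?thesis .
    qed
    have E2: "r powr (a-1) / Gamma a * (sqrt (pi/r) * X) = sqrt pi / Gamma a * (r powr (\<alpha>/2-1) * X)" for X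
    proof -
      have "r powr (a-1) / Gamma a * (sqrt (pi/r) * X) = (r powr (a-1) * sqrt (pi/r)) * X / Gamma a" by simp
      also have "\<dots> = sqrt pi * r powr (\<alpha>/2-1) * X / Gamma a" by (simp only: E)
      finally show ?thesis by simp
    qed
    have "(\<integral>\<^sup>+u. H u r \<partial>lborel) = (\<integral>\<^sup>+u. ennreal (r powr (a-1) / Gamma a) * ennreal ((1 - cos u) * exp (-(r*u^2))) \<partial>lborel)"
      using True Ga by (intro nn_integral_cong) (auto simp: H_def ennreal_mult'[symmetric] mult_ac)
    also have "\<dots> = ennreal (r powr (a-1) / Gamma a) * ennreal (sqrt (pi/r) * (1 - exp (-(1/(4*r)))))"
      by (subst nn_integral_cmult) (auto simp: nn_one_minus_cos_gauss[OF True])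
    also have "\<dots> = ennreal (r powr (a-1) / Gamma a * (sqrt (pi/r) * (1 - exp (-(1/(4*r))))))"
      using Ga by (simp add: ennreal_mult'[symmetric])
    also have "\<dots> = ennreal (sqrt pi / Gamma a * (r powr (\<alpha>/2-1) * (1 - exp (-(1/(4*r))))))"
      by (simp only: E2)
    also have "\<dots> = ennreal (sqrt pi / Gamma a) * ennreal (r powr (\<alpha>/2-1) * (1 - exp (-(1/(4*r)))))"
      using Ga by (simp add: ennreal_mult'[symmetric])
    finally show ?thesis using True by simp
  next
    case False
    then have "r < 0" using r by simp
    then show ?thesis by (simp add: H_def)
  qed
  have "(\<integral>\<^sup>+u. ennreal ((1 - cos u) * \<bar>u\<bar> powr (-1-\<alpha>)) \<partial>lborel) = (\<integral>\<^sup>+u. \<integral>\<^sup>+r. H u r \<partial>lborel \<partial>lborel)"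
    by (simp add: step1)
  also have "\<dots> = (\<integral>\<^sup>+r. \<integral>\<^sup>+u. H u r \<partial>lborel \<partial>lborel)"
    using lborel_pair.Fubini'[OF Hm] by simp
  also have "\<dots> = (\<integral>\<^sup>+r. ennreal (sqrt pi / Gamma a) * ennreal (indicator {0<..} r * r powr (\<alpha>/2-1) * (1 - exp (-(1/(4*r))))) \<partial>lborel)"
  proof (rule nn_integral_cong_AE)
    show "AE r in lborel. (\<integral>\<^sup>+u. H u r \<partial>lborel) = ennreal (sqrt pi / Gamma a) * ennreal (indicator {0<..} r * r powr (\<alpha>/2-1) * (1 - exp (-(1/(4*r)))))"
      using AE_lborel_singleton[of 0]
    proof eventually_elim
      case (elim r)
      then show ?case by (rule step2)
    qed
  qed
  also have "\<dots> = ennreal (sqrt pi / Gamma a) * ennreal (4 powr (-(\<alpha>/2)) / (\<alpha>/2) * Gamma (1-\<alpha>/2))"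
    using a0 a2 by (subst nn_integral_cmult) (auto simp: nn_K_integral)
  also have "\<dots> = ennreal (sqrt pi * (4 powr (-(\<alpha>/2)) / (\<alpha>/2) * Gamma (1-\<alpha>/2)) / Gamma ((1+\<alpha>)/2))"
    using a0 a2 Ga by (subst ennreal_mult'[symmetric]) (auto simp: a_def)
  finally show ?thesis .
qed

lemma calA_I_full:
  fixes \<alpha> :: real assumes a0: "0 < \<alpha>" and a2: "\<alpha> < 2"
  shows "calA (-\<alpha>) 1 * (sqrt pi * (4 powr (-(\<alpha>/2)) / (\<alpha>/2) * Gamma (1-\<alpha>/2)) / Gamma ((1+\<alpha>)/2)) = 1"
proof -
  have ni: "-\<alpha>/2 \<notin> \<int>\<^sub>\<le>\<^sub>0"
  proof
    assume "-\<alpha>/2 \<in> \<int>\<^sub>\<le>\<^sub>0"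
    then obtain n :: nat where n: "-\<alpha>/2 = - real n" by (auto elim!: nonpos_Ints_cases')
    show False
    proof (cases n)
      case 0 then show False using n a0 by simp
    next
      case (Suc k) then show False using n a2 by simp
    qed
  qed
  have g1: "Gamma (-\<alpha>/2 + 1) = (-\<alpha>/2) * Gamma (-\<alpha>/2)" by (rule Gamma_plus1[OF ni])
  have g1': "Gamma (1 - \<alpha>/2) = (-\<alpha>/2) * Gamma (-\<alpha>/2)" using g1 by (simp add: add.commute)
  have pos1: "Gamma (1 - \<alpha>/2) > 0" using a2 by (intro Gamma_real_pos) simp
  have pos2: "Gamma ((1+\<alpha>)/2) > 0" using a0 by (intro Gamma_real_pos) simp
  have absG: "\<bar>Gamma (-\<alpha>/2)\<bar> = Gamma (1 - \<alpha>/2) / (\<alpha>/2)"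
  proof -
    have "Gamma (-\<alpha>/2) = - Gamma (1 - \<alpha>/2) / (\<alpha>/2)" using g1' a0 by (simp add: field_simps)
    thus ?thesis using pos1 a0 by simp
  qed
  have p4: "(4::real) powr (-(\<alpha>/2)) = 2 powr (-\<alpha>)"
  proof -
    have "(4::real) powr (-(\<alpha>/2)) = (2 powr 2) powr (-(\<alpha>/2))" by simp
    also have "\<dots> = 2 powr (-\<alpha>)" by (subst powr_powr) simp
    finally show ?thesis .
  qed
  have "calA (-\<alpha>) 1 = Gamma ((1+\<alpha>)/2) / (sqrt pi * 2 powr (-\<alpha>) * (Gamma (1 - \<alpha>/2) / (\<alpha>/2)))"
    unfolding calA_def using absG by (simp add: powr_half_sqrt)
  moreover have "Gamma ((1+\<alpha>)/2) \<noteq> 0" using pos2 by simp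
  ultimately show ?thesis using pos1 a0 by (simp add: p4 field_simps)
qed

lemma stable_cos_integral:
  fixes \<alpha> z :: real assumes a0: "0 < \<alpha>" and a2: "\<alpha> < 2"
  shows "(\<integral>\<^sup>+x. ennreal ((1 - cos (z*x)) * (if x = 0 then 0 else calA (-\<alpha>) 1 * \<bar>x\<bar> powr (-1-\<alpha>))) \<partial>lborel)
       = ennreal (\<bar>z\<bar> powr \<alpha>)"
proof (cases "z = 0")
  case True
  then show ?thesis by simp
next
  case False
  define A where "A = calA (-\<alpha>) 1"
  define I where "I = sqrt pi * (4 powr (-(\<alpha>/2)) / (\<alpha>/2) * Gamma (1-\<alpha>/2)) / Gamma ((1+\<alpha>)/2)"
  have AI: "A * I = 1" unfolding A_def I_def by (rule calA_I_full[OF a0 a2])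
  have Ipos: "I > 0" unfolding I_def using a0 a2 by (intro divide_pos_pos mult_pos_pos Gamma_real_pos) auto
  have Apos: "A > 0" using AI Ipos by (metis zero_less_mult_pos2 zero_less_one)
  define f where "f = (\<lambda>x. ennreal ((1 - cos (z*x)) * (if x = 0 then 0 else A * \<bar>x\<bar> powr (-1-\<alpha>))))"
  have "(\<integral>\<^sup>+x. f x \<partial>lborel) = ennreal \<bar>1/z\<bar> * (\<integral>\<^sup>+x. f (0 + 1/z * x) \<partial>lborel)"
    by (rule nn_integral_real_affine) (use False in \<open>auto simp: f_def\<close>)
  also have "(\<lambda>x. f (0 + 1/z * x)) = (\<lambda>x. ennreal (A * \<bar>z\<bar> powr (1+\<alpha>)) * ennreal ((1 - cos x) * \<bar>x\<bar> powr (-1-\<alpha>)))"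
  proof
    fix x :: real
    show "f (0 + 1/z * x) = ennreal (A * \<bar>z\<bar> powr (1+\<alpha>)) * ennreal ((1 - cos x) * \<bar>x\<bar> powr (-1-\<alpha>))"
    proof (cases "x = 0")
      case True then show ?thesis by (simp add: f_def)
    next
      case xn: False
      have "\<bar>x/z\<bar> powr (-1-\<alpha>) = \<bar>x\<bar> powr (-1-\<alpha>) * \<bar>z\<bar> powr (1+\<alpha>)"
      proof -
        have "\<bar>z\<bar> powr (1+\<alpha>) = inverse (\<bar>z\<bar> powr (-1-\<alpha>))" using powr_minus[of "\<bar>z\<bar>" "-1-\<alpha>"] by (simp add: add.commute)
        thus ?thesis by (simp add: abs_divide powr_divide, simp add: divide_inverse)
      qed
      moreover have "(1 - cos x) * \<bar>x\<bar> powr (-1-\<alpha>) \<ge> 0" by simp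
      ultimately show ?thesis using False xn Apos
        by (simp add: f_def ennreal_mult'[symmetric] mult_ac)
    qed
  qed
  also have "(\<integral>\<^sup>+x. ennreal (A * \<bar>z\<bar> powr (1+\<alpha>)) * ennreal ((1 - cos x) * \<bar>x\<bar> powr (-1-\<alpha>)) \<partial>lborel)
     = ennreal (A * \<bar>z\<bar> powr (1+\<alpha>)) * ennreal I"
    by (subst nn_integral_cmult) (auto simp: nn_I_full[OF a0 a2] I_def)
  also have "ennreal \<bar>1/z\<bar> * (ennreal (A * \<bar>z\<bar> powr (1+\<alpha>)) * ennreal I) = ennreal (\<bar>1/z\<bar> * (A * \<bar>z\<bar> powr (1+\<alpha>)) * I)"
    using Apos Ipos by (simp add: ennreal_mult'[symmetric] mult.assoc)
  also have "\<bar>1/z\<bar> * (A * \<bar>z\<bar> powr (1+\<alpha>)) * I = \<bar>z\<bar> powr \<alpha>"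
  proof -
    have "\<bar>1/z\<bar> * (A * \<bar>z\<bar> powr (1+\<alpha>)) * I = (A * I) * (\<bar>z\<bar> powr (1+\<alpha>) / \<bar>z\<bar>)" by (simp add: field_simps)
    also have "\<bar>z\<bar> powr (1+\<alpha>) / \<bar>z\<bar> = \<bar>z\<bar> powr \<alpha>" using False by (simp add: powr_add)
    finally show ?thesis using AI by simp
  qed
  finally have "(\<integral>\<^sup>+x. f x \<partial>lborel) = ennreal (\<bar>z\<bar> powr \<alpha>)" .
  thus ?thesis unfolding f_def A_def .
qed

lemma calA_pos:
  fixes \<alpha> :: real assumes a0: "0 < \<alpha>" and a2: "\<alpha> < 2"
  shows "calA (-\<alpha>) 1 > 0"
proof -
  define I where "I = sqrt pi * (4 powr (-(\<alpha>/2)) / (\<alpha>/2) * Gamma (1-\<alpha>/2)) / Gamma ((1+\<alpha>)/2)"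
  have AI: "calA (-\<alpha>) 1 * I = 1" unfolding I_def by (rule calA_I_full[OF a0 a2])
  have Ipos: "I > 0" unfolding I_def using a0 a2 by (intro divide_pos_pos mult_pos_pos Gamma_real_pos) auto
  show ?thesis using AI Ipos by (metis zero_less_mult_pos2 zero_less_one)
qed

lemma stable_nn_cos:
  fixes \<alpha> z :: real assumes a0: "0 < \<alpha>" and a2: "\<alpha> < 2"
  shows "(\<integral>\<^sup>+x. ennreal (1 - cos (z*x)) \<partial>stable_levy_measure \<alpha>) = ennreal (\<bar>z\<bar> powr \<alpha>)"
proof -
  have Apos: "calA (-\<alpha>) 1 > 0" by (rule calA_pos[OF a0 a2])
  have "(\<integral>\<^sup>+x. ennreal (1 - cos (z*x)) \<partial>stable_levy_measure \<alpha>)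
     = (\<integral>\<^sup>+x. ennreal (if x = 0 then 0 else calA (- \<alpha>) 1 * \<bar>x\<bar> powr (- 1 - \<alpha>)) * ennreal (1 - cos (z*x)) \<partial>lborel)"
    unfolding stable_levy_measure_def by (subst nn_integral_density) auto
  also have "\<dots> = (\<integral>\<^sup>+x. ennreal ((1 - cos (z*x)) * (if x = 0 then 0 else calA (-\<alpha>) 1 * \<bar>x\<bar> powr (-1-\<alpha>))) \<partial>lborel)"
    using Apos by (intro nn_integral_cong) (simp add: ennreal_mult'[symmetric] mult.commute)
  also have "\<dots> = ennreal (\<bar>z\<bar> powr \<alpha>)" by (rule stable_cos_integral[OF a0 a2])
  finally show ?thesis .
qed

lemma sin_minus_x_bound: "\<bar>sin (x::real) - x\<bar> \<le> x^2/2"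
  using Maclaurin_sin_bound[of x 2] by (simp add: numeral_2_eq_2 sin_coeff_def)

lemma levy_exponent_Y:
  fixes \<alpha> z :: real and \<nu>Y \<sigma>p \<sigma>n :: "real measure"
  assumes a0: "0 < \<alpha>" and a2: "\<alpha> < 2"
    and lev: "is_levy_measure \<nu>Y" and sym: "symmetric_measure \<nu>Y"
    and sp: "sets \<sigma>p = sets borel" and sn: "sets \<sigma>n = sets borel"
    and fp: "finite_measure \<sigma>p" and fn: "finite_measure \<sigma>n"
    and eqA: "\<forall>A\<in>sets borel. emeasure (stable_levy_measure \<alpha>) A + emeasure \<sigma>n A
                       = emeasure \<nu>Y A + emeasure \<sigma>p A"
  shows "\<exists>Gp Gn. levy_exponent \<nu>Y z = complex_of_real (\<bar>z\<bar> powr \<alpha> + Gn - Gp)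
             \<and> 0 \<le> Gp \<and> Gp \<le> 2 * measure \<sigma>p UNIV \<and> 0 \<le> Gn \<and> Gn \<le> 2 * measure \<sigma>n UNIV"
proof -
  have sY: "sets \<nu>Y = sets borel" and nul: "emeasure \<nu>Y {0} = 0"
    and fin: "(\<integral>\<^sup>+ x. ennreal (min 1 (x\<^sup>2)) \<partial>\<nu>Y) < \<infinity>"
    using lev unfolding is_levy_measure_def by auto
  have spY: "space \<nu>Y = UNIV" using sets_eq_imp_space_eq[OF sY] by simp
  have spp: "space \<sigma>p = UNIV" using sets_eq_imp_space_eq[OF sp] by simp
  have spn: "space \<sigma>n = UNIV" using sets_eq_imp_space_eq[OF sn] by simp
  have sS: "sets (stable_levy_measure \<alpha>) = sets borel" by (simp add: stable_levy_measure_def)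
  define g where "g = (\<lambda>x::real. 1 - cos (z*x))"
  have g0: "0 \<le> g x" and g2: "g x \<le> 2" for x by (auto simp: g_def)
  have gm: "g \<in> borel_measurable borel" unfolding g_def by measurable
  have mY: "f \<in> borel_measurable \<nu>Y" if "f \<in> borel_measurable borel" for f :: "real \<Rightarrow> 'b::topological_space"
    by (subst measurable_cong_sets[OF sY refl]) (rule that)
  have mp: "f \<in> borel_measurable \<sigma>p" if "f \<in> borel_measurable borel" for f :: "real \<Rightarrow> 'b::topological_space"
    by (subst measurable_cong_sets[OF sp refl]) (rule that)
  have mn: "f \<in> borel_measurable \<sigma>n" if "f \<in> borel_measurable borel" for f :: "real \<Rightarrow> 'b::topological_space"
    by (subst measurable_cong_sets[OF sn refl]) (rule that)
  define Gp where "Gp = (\<integral>x. g x \<partial>\<sigma>p)"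
  define Gn where "Gn = (\<integral>x. g x \<partial>\<sigma>n)"
  have ip: "integrable \<sigma>p g"
    by (rule finite_measure.integrable_const_bound[OF fp, where B=2]) (use g0 g2 mp[OF gm] in auto)
  have inn: "integrable \<sigma>n g"
    by (rule finite_measure.integrable_const_bound[OF fn, where B=2]) (use g0 g2 mn[OF gm] in auto)
  have nnp: "(\<integral>\<^sup>+x. ennreal (g x) \<partial>\<sigma>p) = ennreal Gp"
    unfolding Gp_def by (rule nn_integral_eq_integral[OF ip]) (use g0 in auto)
  have nnn: "(\<integral>\<^sup>+x. ennreal (g x) \<partial>\<sigma>n) = ennreal Gn"
    unfolding Gn_def by (rule nn_integral_eq_integral[OF inn]) (use g0 in auto)
  have Gp0: "0 \<le> Gp" unfolding Gp_def using g0 by (intro integral_nonneg_AE) auto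
  have Gn0: "0 \<le> Gn" unfolding Gn_def using g0 by (intro integral_nonneg_AE) auto
  have Gp2: "Gp \<le> 2 * measure \<sigma>p UNIV"
  proof -
    have "Gp \<le> (\<integral>x. 2 \<partial>\<sigma>p)" unfolding Gp_def
      by (rule integral_mono[OF ip]) (use g2 finite_measure.integrable_const[OF fp] in auto)
    thus ?thesis using spp by simp
  qed
  have Gn2: "Gn \<le> 2 * measure \<sigma>n UNIV"
  proof -
    have "Gn \<le> (\<integral>x. 2 \<partial>\<sigma>n)" unfolding Gn_def
      by (rule integral_mono[OF inn]) (use g2 finite_measure.integrable_const[OF fn] in auto)
    thus ?thesis using spn by simp
  qed
  have four: "(\<integral>\<^sup>+x. ennreal (g x) \<partial>stable_levy_measure \<alpha>) + (\<integral>\<^sup>+x. ennreal (g x) \<partial>\<sigma>n)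
      = (\<integral>\<^sup>+x. ennreal (g x) \<partial>\<nu>Y) + (\<integral>\<^sup>+x. ennreal (g x) \<partial>\<sigma>p)"
    by (rule nn_integral_four_meas[OF sS sn sY sp eqA]) (use gm in measurable)
  have st: "(\<integral>\<^sup>+x. ennreal (g x) \<partial>stable_levy_measure \<alpha>) = ennreal (\<bar>z\<bar> powr \<alpha>)"
    unfolding g_def by (rule stable_nn_cos[OF a0 a2])
  have eqn: "ennreal (\<bar>z\<bar> powr \<alpha> + Gn) = (\<integral>\<^sup>+x. ennreal (g x) \<partial>\<nu>Y) + ennreal Gp"
    using four st nnp nnn Gn0 by (simp add: ennreal_plus)
  have finY: "(\<integral>\<^sup>+x. ennreal (g x) \<partial>\<nu>Y) < \<infinity>"
  proof -
    have "(\<integral>\<^sup>+x. ennreal (g x) \<partial>\<nu>Y) \<le> ennreal (\<bar>z\<bar> powr \<alpha> + Gn)"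
      using eqn by simp
    from le_less_trans[OF this ennreal_less_top] show ?thesis by simp
  qed
  have iY: "integrable \<nu>Y g"
    by (rule integrableI_bounded) (use mY[OF gm] finY g0 in auto)
  define GY where "GY = (\<integral>x. g x \<partial>\<nu>Y)"
  have nnY: "(\<integral>\<^sup>+x. ennreal (g x) \<partial>\<nu>Y) = ennreal GY"
    unfolding GY_def by (rule nn_integral_eq_integral[OF iY]) (use g0 in auto)
  have GY0: "0 \<le> GY" unfolding GY_def using g0 by (intro integral_nonneg_AE) auto
  have "ennreal (\<bar>z\<bar> powr \<alpha> + Gn) = ennreal (GY + Gp)"
    using eqn nnY GY0 Gp0 by (simp add: ennreal_plus)
  hence GYeq: "GY = \<bar>z\<bar> powr \<alpha> + Gn - Gp"
    using GY0 Gp0 Gn0 by (subst (asm) ennreal_inj) auto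
  define h where "h = (\<lambda>x::real. z * x * indicator {-1<..<1} x - sin (z*x))"
  have hm: "h \<in> borel_measurable borel" unfolding h_def by measurable
  have hb: "\<bar>h x\<bar> \<le> (1 + z^2) * min 1 (x^2)" for x
  proof (cases "x \<in> {-1<..<1}")
    case True
    have "\<bar>h x\<bar> = \<bar>sin (z*x) - z*x\<bar>" using True by (simp add: h_def)
    also have "\<dots> \<le> (z*x)^2/2" by (rule sin_minus_x_bound)
    also have "\<dots> \<le> (1 + z^2) * (x^2)"
    proof -
      have "(z*x)^2/2 \<le> (z*x)^2" by simp
      also have "(z*x)^2 = z^2 * x^2" by (simp add: power_mult_distrib)
      also have "\<dots> \<le> (1+z^2)*x^2" by (rule mult_right_mono) simp_all
      finally show ?thesis .
    qed
    also have "x^2 = min 1 (x^2)"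
    proof -
      have "x^2 \<le> 1" using True by (simp add: abs_square_le_1 abs_le_iff)
      thus ?thesis by simp
    qed
    finally show ?thesis by simp
  next
    case False
    hence "1 \<le> \<bar>x\<bar>" by auto
    hence "1 \<le> x^2" using one_le_power[of "\<bar>x\<bar>" 2] by simp
    hence e: "min 1 (x^2) = 1" by simp
    have "\<bar>h x\<bar> \<le> 1" using False by (simp add: h_def)
    moreover have "1 \<le> 1 + z^2" by simp
    ultimately show ?thesis unfolding e mult_1_right by linarith
  qed
  have imin: "integrable \<nu>Y (\<lambda>x. min 1 (x^2))"
    by (rule integrableI_bounded) (use fin in \<open>auto intro: mY\<close>)
  have ih: "integrable \<nu>Y h"
    by (rule Bochner_Integration.integrable_bound[OF integrable_mult_right[OF imin, of "1 + z^2"]])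
       (use mY[OF hm] hb in auto)
  have dist: "distr \<nu>Y borel uminus = \<nu>Y"
  proof (rule measure_eqI)
    show "sets (distr \<nu>Y borel uminus) = sets \<nu>Y" using sY by simp
    fix A assume "A \<in> sets (distr \<nu>Y borel uminus)"
    hence A: "A \<in> sets borel" by simp
    have "uminus -` A \<inter> space \<nu>Y = uminus ` A" using spY by (auto simp: image_iff) (metis minus_minus)
    moreover have "uminus \<in> measurable \<nu>Y borel" using mY[of uminus] by simp
    ultimately have "emeasure (distr \<nu>Y borel uminus) A = emeasure \<nu>Y (uminus ` A)"
      using A by (simp add: emeasure_distr)
    also have "\<dots> = emeasure \<nu>Y A" using sym A unfolding symmetric_measure_def by auto
    finally show "emeasure (distr \<nu>Y borel uminus) A = emeasure \<nu>Y A" .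
  qed
  have hodd: "h (- x) = - h x" for x by (auto simp: h_def indicator_def)
  have "(\<integral>x. h x \<partial>\<nu>Y) = (\<integral>x. h x \<partial>distr \<nu>Y borel uminus)" using dist by simp
  also have "\<dots> = (\<integral>x. h (- x) \<partial>\<nu>Y)"
    by (rule integral_distr) (use mY[of uminus] hm in auto)
  also have "\<dots> = - (\<integral>x. h x \<partial>\<nu>Y)" by (simp add: hodd)
  finally have h0: "(\<integral>x. h x \<partial>\<nu>Y) = 0" by simp
  have pt: "1 - cis (z * x) + \<i> * complex_of_real (z * x * indicator {-1<..<1} x)
          = complex_of_real (g x) + \<i> * complex_of_real (h x)" for x
    by (simp add: g_def h_def complex_eq_iff)
  have "levy_exponent \<nu>Y z = (\<integral>x. complex_of_real (g x) + \<i> * complex_of_real (h x) \<partial>\<nu>Y)"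
    unfolding levy_exponent_def by (simp only: pt)
  also have "\<dots> = complex_of_real (\<integral>x. g x \<partial>\<nu>Y) + \<i> * complex_of_real (\<integral>x. h x \<partial>\<nu>Y)"
  proof -
    have i1: "integrable \<nu>Y (\<lambda>x. complex_of_real (g x))" using iY by (rule integrable_of_real)
    have i2: "integrable \<nu>Y (\<lambda>x. \<i> * complex_of_real (h x))"
      using integrable_of_real[OF ih] by (rule integrable_mult_right)
    show ?thesis
      by (simp add: Bochner_Integration.integral_add[OF i1 i2] integral_complex_of_real)
  qed
  also have "\<dots> = complex_of_real (\<bar>z\<bar> powr \<alpha> + Gn - Gp)"
    using h0 GYeq by (simp add: GY_def)
  finally show ?thesis using Gp0 Gp2 Gn0 Gn2 by blast
qed

lemma fourier_gauss_identity:
  fixes f :: "real \<Rightarrow> real" and e x :: real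
  assumes int: "integrable lborel f" and e: "e > 0"
  shows "complex_of_real (\<integral>y. f y * (sqrt (2*pi) / e * exp (-(((y-x)/e)^2)/2)) \<partial>lborel)
       = (\<integral>z. (\<integral>y. cis (z*y) * complex_of_real (f y) \<partial>lborel) * (cis (-(z*x)) * complex_of_real (exp (-((e*z)^2)/2))) \<partial>lborel)"
proof -
  have fm[measurable]: "f \<in> borel_measurable lborel" using int by (rule borel_measurable_integrable)
  define E where "E = (\<lambda>z::real. exp (-((e*z)^2)/2))"
  have iE: "integrable lborel E" unfolding E_def by (rule gauss_integrable[OF e])
  have Em[measurable]: "E \<in> borel_measurable borel" unfolding E_def by measurable
  define \<Phi> where "\<Phi> = (\<lambda>y z::real. cis (z*y) * complex_of_real (f y) * (cis (-(z*x)) * complex_of_real (E z)))"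
  have \<Phi>alt: "\<Phi> y z = complex_of_real (f y) * (cis (z*(y-x)) * complex_of_real (E z))" for y z
  proof -
    have "cis (z*y) * cis (-(z*x)) = cis (z*(y-x))" by (simp add: cis_mult algebra_simps)
    thus ?thesis unfolding \<Phi>_def by (metis (no_types, lifting) mult.assoc mult.commute)
  qed
  have norm\<Phi>: "norm (\<Phi> y z) = \<bar>f y\<bar> * E z" for y z
    by (simp add: \<Phi>_def norm_mult E_def)
  have \<Phi>m: "(\<lambda>(y,z). \<Phi> y z) \<in> borel_measurable (lborel \<Otimes>\<^sub>M lborel)"
    unfolding \<Phi>_def by measurable
  have intP: "integrable (lborel \<Otimes>\<^sub>M lborel) (\<lambda>(y,z). \<Phi> y z)"
  proof (rule lborel_pair.Fubini_integrable)
    show "(\<lambda>(y,z). \<Phi> y z) \<in> borel_measurable (lborel \<Otimes>\<^sub>M lborel)" by (fact \<Phi>m)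
    have "(\<lambda>y. \<integral>z. norm (case (y,z) of (y,z) \<Rightarrow> \<Phi> y z) \<partial>lborel) = (\<lambda>y. \<bar>f y\<bar> * (\<integral>z. E z \<partial>lborel))"
      by (simp add: norm\<Phi>)
    moreover have "integrable lborel (\<lambda>y. \<bar>f y\<bar> * (\<integral>z. E z \<partial>lborel))"
      using int by (intro integrable_mult_left integrable_abs)
    ultimately show "integrable lborel (\<lambda>y. \<integral>z. norm (case (y,z) of (y,z) \<Rightarrow> \<Phi> y z) \<partial>lborel)" by simp
    show "AE y in lborel. integrable lborel (\<lambda>z. case (y,z) of (y,z) \<Rightarrow> \<Phi> y z)"
    proof (rule AE_I2)
      fix y
      show "integrable lborel (\<lambda>z. case (y,z) of (y,z) \<Rightarrow> \<Phi> y z)"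
      proof (rule Bochner_Integration.integrable_bound[OF integrable_mult_right[OF iE, of "\<bar>f y\<bar>"]])
        show "(\<lambda>z. case (y,z) of (y,z) \<Rightarrow> \<Phi> y z) \<in> borel_measurable lborel"
          using \<Phi>m by measurable
      qed (simp add: norm\<Phi> E_def)
    qed
  qed
  have "(\<integral>z. (\<integral>y. cis (z*y) * complex_of_real (f y) \<partial>lborel) * (cis (-(z*x)) * complex_of_real (E z)) \<partial>lborel)
      = (\<integral>z. (\<integral>y. \<Phi> y z \<partial>lborel) \<partial>lborel)"
    unfolding \<Phi>_def by (simp add: integral_mult_left_zero)
  also have "\<dots> = (\<integral>y. (\<integral>z. \<Phi> y z \<partial>lborel) \<partial>lborel)"
    using lborel_pair.Fubini_integral[OF intP] by simp
  also have "\<dots> = (\<integral>y. complex_of_real (f y * (sqrt (2*pi) / e * exp (-(((y-x)/e)^2)/2))) \<partial>lborel)"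
  proof (rule Bochner_Integration.integral_cong[OF refl])
    fix y
    have "(\<integral>z. \<Phi> y z \<partial>lborel) = complex_of_real (f y) * (\<integral>z. cis (z*(y-x)) * complex_of_real (E z) \<partial>lborel)"
      by (simp add: \<Phi>alt integral_mult_right_zero)
    also have "\<dots> = complex_of_real (f y) * complex_of_real (sqrt (2*pi) / e * exp (-(((y-x)/e)^2)/2))"
      unfolding E_def by (simp only: gauss_ft_scaled[OF e])
    finally show "(\<integral>z. \<Phi> y z \<partial>lborel) = complex_of_real (f y * (sqrt (2*pi) / e * exp (-(((y-x)/e)^2)/2)))"
      by simp
  qed
  also have "\<dots> = complex_of_real (\<integral>y. f y * (sqrt (2*pi) / e * exp (-(((y-x)/e)^2)/2)) \<partial>lborel)"
    by (rule integral_complex_of_real)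
  finally show ?thesis unfolding E_def by simp
qed

lemma fourier_smoothed_bound:
  fixes f :: "real \<Rightarrow> real" and F :: "real \<Rightarrow> complex" and G :: "real \<Rightarrow> real"
  assumes int: "integrable lborel f"
    and FT: "\<And>z. (\<integral>y. cis (z*y) * complex_of_real (f y) \<partial>lborel) = F z"
    and iG: "integrable lborel G" and bG: "\<And>z. norm (F z) \<le> G z"
    and e: "e > 0"
  shows "(\<integral>y. f y * normal_density x e y \<partial>lborel) \<le> (\<integral>z. G z \<partial>lborel) / (2*pi)"
proof -
  define K where "K = (\<lambda>y. sqrt (2*pi) / e * exp (-(((y-x)/e)^2)/2))"
  define J where "J = (\<integral>z. F z * (cis (-(z*x)) * complex_of_real (exp (-((e*z)^2)/2))) \<partial>lborel)"
  have idt: "complex_of_real (\<integral>y. f y * K y \<partial>lborel) = J"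
    unfolding K_def J_def using fourier_gauss_identity[OF int e, of x] by (simp add: FT)
  have G0: "0 \<le> G z" for z using bG[of z] norm_ge_zero order_trans by blast
  have nJ: "norm J \<le> (\<integral>z. G z \<partial>lborel)"
  proof (cases "integrable lborel (\<lambda>z. F z * (cis (-(z*x)) * complex_of_real (exp (-((e*z)^2)/2))))")
    case True
    have "ennreal (norm J) \<le> (\<integral>\<^sup>+z. norm (F z * (cis (-(z*x)) * complex_of_real (exp (-((e*z)^2)/2)))) \<partial>lborel)"
      unfolding J_def by (rule integral_norm_bound_ennreal[OF True])
    also have "\<dots> \<le> (\<integral>\<^sup>+z. ennreal (G z) \<partial>lborel)"
    proof (rule nn_integral_mono)
      fix z
      have "norm (F z * (cis (-(z*x)) * complex_of_real (exp (-((e*z)^2)/2)))) = norm (F z) * exp (-((e*z)^2)/2)"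
        by (simp add: norm_mult)
      also have "\<dots> \<le> G z * 1" using bG[of z] G0[of z] by (intro mult_mono) auto
      finally show "ennreal (norm (F z * (cis (-(z*x)) * complex_of_real (exp (-((e*z)^2)/2))))) \<le> ennreal (G z)"
        by (intro ennreal_leI) simp
    qed
    also have "\<dots> = ennreal (\<integral>z. G z \<partial>lborel)"
      by (rule nn_integral_eq_integral[OF iG]) (use G0 in auto)
    finally show ?thesis using G0 by (subst (asm) ennreal_le_iff) (auto intro: integral_nonneg)
  next
    case False
    then have "J = 0" unfolding J_def by (rule not_integrable_integral_eq)
    then show ?thesis using G0 by (simp add: integral_nonneg)
  qed
  have Keq: "K y = 2*pi * normal_density x e y" for y
  proof -
    define E' where "E' = exp (-((y-x)^2/(2*e^2)))"
    have s: "sqrt (2*pi*e^2) = sqrt (2*pi) * e" using e by (simp add: real_sqrt_mult)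
    have k: "K y = sqrt (2*pi) / e * E'" unfolding K_def E'_def using e by (simp add: power_divide)
    have n: "normal_density x e y = 1 / (sqrt (2*pi) * e) * E'" unfolding normal_density_def E'_def s by simp
    have t: "2*pi / (sqrt (2*pi) * e) = sqrt (2*pi) / e"
      using e by (simp add: field_simps)
    have "2*pi * normal_density x e y = (2*pi / (sqrt (2*pi) * e)) * E'" unfolding n by simp
    also have "\<dots> = K y" unfolding t k ..
    finally show ?thesis by simp
  qed
  have "(\<integral>y. f y * K y \<partial>lborel) \<le> (\<integral>z. G z \<partial>lborel)"
    using nJ idt[symmetric] by simp
  also have "(\<integral>y. f y * K y \<partial>lborel) = 2*pi * (\<integral>y. f y * normal_density x e y \<partial>lborel)"
  proof -
    have "(\<integral>y. f y * K y \<partial>lborel) = (\<integral>y. 2*pi * (f y * normal_density x e y) \<partial>lborel)"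
      by (rule Bochner_Integration.integral_cong[OF refl]) (simp add: Keq)
    also have "\<dots> = 2*pi * (\<integral>y. f y * normal_density x e y \<partial>lborel)"
      by (rule integral_mult_right_zero)
    finally show ?thesis .
  qed
  finally show ?thesis by (simp add: field_simps)
qed

lemma exp_neg_le_inv: "(s::real) > 0 \<Longrightarrow> exp (-s) \<le> 1/s"
proof -
  assume s: "s > 0"
  have "s \<le> exp s" using exp_ge_add_one_self[of s] by linarith
  hence "inverse (exp s) \<le> inverse s" using s by (intro le_imp_inverse_le) auto
  thus ?thesis by (simp add: exp_minus divide_inverse)
qed

lemma fourier_bound_upper:
  fixes f :: "real \<Rightarrow> real" and F :: "real \<Rightarrow> complex" and G :: "real \<Rightarrow> real"
  assumes cont: "continuous_on UNIV f" and int: "integrable lborel f"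
    and FT: "\<And>z. (\<integral>y. cis (z*y) * complex_of_real (f y) \<partial>lborel) = F z"
    and iG: "integrable lborel G" and bG: "\<And>z. norm (F z) \<le> G z"
  shows "f x \<le> (\<integral>z. G z \<partial>lborel) / (2*pi)"
proof (rule ccontr)
  define B where "B = (\<integral>z. G z \<partial>lborel) / (2*pi)"
  assume "\<not> f x \<le> (\<integral>z. G z \<partial>lborel) / (2*pi)"
  hence fx: "f x > B" unfolding B_def by simp
  define \<eta> where "\<eta> = f x - B"
  have \<eta>: "\<eta> > 0" using fx by (simp add: \<eta>_def)
  have G0: "0 \<le> G z" for z using bG[of z] norm_ge_zero order_trans by blast
  have B0: "0 \<le> B" unfolding B_def using G0 by (intro divide_nonneg_pos integral_nonneg_AE AE_I2) auto
  obtain \<delta> where \<delta>: "\<delta> > 0" and \<delta>c: "\<And>y. dist y x < \<delta> \<Longrightarrow> dist (f y) (f x) < \<eta>/2"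
    using cont \<eta> unfolding continuous_on_iff by (metis UNIV_I half_gt_zero)
  define B' where "B' = B + \<eta>/2"
  have B'0: "B' > 0" using B0 \<eta> by (simp add: B'_def)
  have near: "f y \<ge> B'" if "\<bar>y - x\<bar> < \<delta>" for y
  proof -
    have "\<bar>f y - f x\<bar> < \<eta>/2" using \<delta>c[of y] that by (simp add: dist_real_def)
    moreover have "- (f y - f x) \<le> \<bar>f y - f x\<bar>" by (rule abs_ge_minus_self)
    ultimately show ?thesis unfolding B'_def \<eta>_def by (smt (verit) field_sum_of_halves)
  qed
  define L where "L = (\<integral>y. \<bar>f y\<bar> \<partial>lborel)"
  have L0: "L \<ge> 0" unfolding L_def by (intro integral_nonneg_AE) auto
  define c where "c = (B' + 2*L) / \<delta>^2"
  have c0: "c \<ge> 0" unfolding c_def using B'0 L0 by simp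
  define e where "e = min 1 (\<eta> / (4*c+4))"
  have e0: "e > 0" unfolding e_def using \<eta> c0 by simp
  have e1: "e \<le> 1" unfolding e_def by simp
  have e2: "e \<le> \<eta> / (4*c+4)" unfolding e_def by simp
  define nd where "nd = normal_density x e"
  define kmax where "kmax = 1 / sqrt (2*pi*e^2) * exp (-(\<delta>^2/(2*e^2)))"
  have fm[measurable]: "f \<in> borel_measurable lborel" using int by (rule borel_measurable_integrable)
  have nd0: "0 \<le> nd y" for y by (simp add: nd_def)
  have ndmax: "nd y \<le> 1 / sqrt (2*pi*e^2)" for y
  proof -
    have "0 \<le> (y - x)^2 / (2 * e^2)" by simp
    hence "exp (-((y - x)^2) / (2 * e^2)) \<le> 1" by simp
    hence "1 / sqrt (2*pi*e^2) * exp (-((y - x)^2) / (2 * e^2)) \<le> 1 / sqrt (2*pi*e^2) * 1"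
      by (intro mult_left_mono) auto
    thus ?thesis unfolding nd_def normal_density_def by simp
  qed
  have ndfar: "nd y \<le> kmax" if "\<delta> \<le> \<bar>y - x\<bar>" for y
  proof -
    have "\<delta>^2 \<le> \<bar>y - x\<bar>^2" using that \<delta> by (intro power_mono) auto
    hence "\<delta>^2 \<le> (y-x)^2" by simp
    hence "-((y-x)^2/(2*e^2)) \<le> -(\<delta>^2/(2*e^2))" using e0 by (simp add: divide_right_mono)
    hence "exp (-((y-x)^2/(2*e^2))) \<le> exp (-(\<delta>^2/(2*e^2)))" by simp
    thus ?thesis unfolding nd_def kmax_def normal_density_def
      by (intro mult_left_mono) auto
  qed
  have inf: "integrable lborel (\<lambda>y. f y * nd y)"
  proof (rule Bochner_Integration.integrable_bound[OF integrable_mult_right[OF integrable_abs[OF int], of "1 / sqrt (2*pi*e^2)"]])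
    show "(\<lambda>y. f y * nd y) \<in> borel_measurable lborel" unfolding nd_def by measurable
    show "AE y in lborel. norm (f y * nd y) \<le> norm (1 / sqrt (2*pi*e^2) * \<bar>f y\<bar>)"
    proof (rule AE_I2)
      fix y
      have "\<bar>f y\<bar> * nd y \<le> \<bar>f y\<bar> * (1 / sqrt (2*pi*e^2))" by (intro mult_left_mono ndmax) auto
      thus "norm (f y * nd y) \<le> norm (1 / sqrt (2*pi*e^2) * \<bar>f y\<bar>)" using nd0[of y] by (simp add: abs_mult mult_ac)
    qed
  qed
  have ind: "integrable lborel nd" unfolding nd_def using e0 by simp
  have ind2: "integrable lborel (\<lambda>y. nd y * (y - x)^2)"
    unfolding nd_def using integrable_normal_moment[of e x 2] e0 by simp
  have Ind: "(\<integral>y. nd y \<partial>lborel) = 1" unfolding nd_def using e0 by simp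
  have Ind2: "(\<integral>y. nd y * (y - x)^2 \<partial>lborel) = e^2"
    unfolding nd_def using integral_normal_moment_even[of e x 1] e0 by (simp add: power2_eq_square)
  define low where "low = (\<lambda>y. B' * nd y - B' / \<delta>^2 * (nd y * (y-x)^2) - kmax * \<bar>f y\<bar>)"
  have ilow: "integrable lborel low" unfolding low_def
    using ind ind2 int by (intro Bochner_Integration.integrable_diff integrable_mult_right integrable_abs)
  have Ilow: "(\<integral>y. low y \<partial>lborel) = B' - B' / \<delta>^2 * e^2 - kmax * L"
  proof -
    have i1: "integrable lborel (\<lambda>y. B' * nd y)" using ind by (rule integrable_mult_right)
    have i2: "integrable lborel (\<lambda>y. B' / \<delta>^2 * (nd y * (y-x)^2))" using ind2 by (rule integrable_mult_right)
    have i3: "integrable lborel (\<lambda>y. kmax * \<bar>f y\<bar>)" using int by (intro integrable_mult_right integrable_abs)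
    have "(\<integral>y. low y \<partial>lborel) = (\<integral>y. B' * nd y - B' / \<delta>^2 * (nd y * (y-x)^2) \<partial>lborel) - (\<integral>y. kmax * \<bar>f y\<bar> \<partial>lborel)"
      unfolding low_def by (rule Bochner_Integration.integral_diff[OF Bochner_Integration.integrable_diff[OF i1 i2] i3])
    also have "(\<integral>y. B' * nd y - B' / \<delta>^2 * (nd y * (y-x)^2) \<partial>lborel) = (\<integral>y. B' * nd y \<partial>lborel) - (\<integral>y. B' / \<delta>^2 * (nd y * (y-x)^2) \<partial>lborel)"
      by (rule Bochner_Integration.integral_diff[OF i1 i2])
    finally show ?thesis using Ind Ind2 by (simp add: L_def)
  qed
  have lowle: "low y \<le> f y * nd y" for y
  proof (cases "\<bar>y - x\<bar> < \<delta>")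
    case True
    have a: "B' * nd y \<le> f y * nd y" using near[OF True] nd0[of y] by (intro mult_right_mono) auto
    have b: "0 \<le> B' / \<delta>^2 * (nd y * (y-x)^2)" using B'0 nd0[of y] by simp
    have c: "0 \<le> kmax * \<bar>f y\<bar>" unfolding kmax_def by simp
    show ?thesis unfolding low_def using a b c by linarith
  next
    case False
    hence far: "\<delta> \<le> \<bar>y - x\<bar>" by simp
    have "\<delta>^2 \<le> \<bar>y - x\<bar>^2" using far \<delta> by (intro power_mono) auto
    hence d2: "\<delta>^2 \<le> (y-x)^2" by simp
    have a: "B' * nd y \<le> B' / \<delta>^2 * (nd y * (y-x)^2)"
    proof -
      have "B' * nd y = B' / \<delta>^2 * (nd y * \<delta>^2)" using \<delta> by simp
      also have "\<dots> \<le> B' / \<delta>^2 * (nd y * (y-x)^2)"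
        using B'0 nd0[of y] d2 by (intro mult_left_mono) auto
      finally show ?thesis .
    qed
    have b: "- (\<bar>f y\<bar> * kmax) \<le> f y * nd y"
    proof -
      have "\<bar>f y\<bar> * nd y \<le> \<bar>f y\<bar> * kmax" using ndfar[OF far] by (intro mult_left_mono) auto
      moreover have "- (\<bar>f y\<bar> * nd y) \<le> f y * nd y"
      proof -
        have "- \<bar>f y\<bar> \<le> f y" by (cases "f y \<ge> 0") auto
        hence "(- \<bar>f y\<bar>) * nd y \<le> f y * nd y" using nd0[of y] by (rule mult_right_mono)
        thus ?thesis by simp
      qed
      ultimately show ?thesis by linarith
    qed
    have "kmax * \<bar>f y\<bar> = \<bar>f y\<bar> * kmax" by (rule mult.commute)
    thus ?thesis unfolding low_def using a b by linarith
  qed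
  have mono: "(\<integral>y. low y \<partial>lborel) \<le> (\<integral>y. f y * nd y \<partial>lborel)"
    by (rule integral_mono[OF ilow inf lowle])
  have kb: "kmax \<le> 2*e/\<delta>^2"
  proof -
    define s where "s = \<delta>^2/(2*e^2)"
    have s0: "s > 0" unfolding s_def using \<delta> e0 by simp
    have ex: "exp (-s) \<le> 2*e^2/\<delta>^2" using exp_neg_le_inv[OF s0] unfolding s_def by simp
    have sq: "sqrt (2*pi*e^2) = sqrt (2*pi) * e" using e0 by (simp add: real_sqrt_mult)
    have sq1: "1 \<le> sqrt (2*pi)" using pi_gt3 by simp
    have "kmax = exp (-s) / (sqrt (2*pi) * e)" unfolding kmax_def s_def sq by simp
    also have "\<dots> \<le> exp (-s) / e"
      using e0 sq1 by (intro divide_left_mono) (auto intro: mult_pos_pos)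
    also have "\<dots> \<le> (2*e^2/\<delta>^2) / e" using e0 ex by (intro divide_right_mono) auto
    also have "\<dots> = 2*e/\<delta>^2" using e0 by (simp add: power2_eq_square)
    finally show ?thesis .
  qed
  have "B' / \<delta>^2 * e^2 + kmax * L \<le> c * e"
  proof -
    have "B' / \<delta>^2 * e^2 \<le> B' / \<delta>^2 * e"
      using B'0 e0 e1 by (intro mult_left_mono) (auto simp: power2_eq_square mult_le_cancel_left1)
    moreover have "kmax * L \<le> 2*e/\<delta>^2 * L" using kb L0 by (rule mult_right_mono)
    ultimately have "B' / \<delta>^2 * e^2 + kmax * L \<le> B' / \<delta>^2 * e + 2*e/\<delta>^2 * L" by linarith
    also have "\<dots> = c * e" unfolding c_def using \<delta> by (simp add: field_simps)
    finally show ?thesis .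
  qed
  moreover have "c * e \<le> \<eta>/4"
  proof -
    have "c * e \<le> c * (\<eta> / (4*c+4))" using e2 c0 by (rule mult_left_mono)
    also have "\<dots> \<le> \<eta>/4" using c0 \<eta> by (simp add: field_simps)
    finally show ?thesis .
  qed
  ultimately have "(\<integral>y. f y * nd y \<partial>lborel) \<ge> B' - \<eta>/4" using mono Ilow by linarith
  hence "(\<integral>y. f y * nd y \<partial>lborel) > B" unfolding B'_def using \<eta> by linarith
  moreover have "(\<integral>y. f y * nd y \<partial>lborel) \<le> B"
    unfolding nd_def B_def by (rule fourier_smoothed_bound[OF int FT iG bG e0])
  ultimately show False by simp
qed

lemma fourier_bound:
  fixes f :: "real \<Rightarrow> real" and F :: "real \<Rightarrow> complex" and G :: "real \<Rightarrow> real"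
  assumes cont: "continuous_on UNIV f" and int: "integrable lborel f"
    and FT: "\<And>z. (\<integral>y. cis (z*y) * complex_of_real (f y) \<partial>lborel) = F z"
    and iG: "integrable lborel G" and bG: "\<And>z. norm (F z) \<le> G z"
  shows "\<bar>f x\<bar> \<le> (\<integral>z. G z \<partial>lborel) / (2*pi)"
proof -
  have 1: "f x \<le> (\<integral>z. G z \<partial>lborel) / (2*pi)" by (rule fourier_bound_upper[OF cont int FT iG bG])
  have FT': "(\<integral>y. cis (z*y) * complex_of_real (- f y) \<partial>lborel) = - F z" for z
    using FT[of z] by (simp add: integral_minus[symmetric])
  have 2: "- f x \<le> (\<integral>z. G z \<partial>lborel) / (2*pi)"
    by (rule fourier_bound_upper[of "\<lambda>y. - f y" "\<lambda>z. - F z" G, OF _ _ FT' iG])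
       (use cont int bG in \<open>auto intro: continuous_on_minus\<close>)
  show ?thesis using 1 2 by linarith
qed

definition C0 :: real where "C0 = (\<integral>u. exp (- \<bar>u\<bar>) \<partial>lborel)"

lemma integrable_exp_abs: "integrable lborel (\<lambda>u::real. exp (- \<bar>u\<bar>))"
proof -
  have "((\<lambda>x::real. exp (-1*x)) has_integral exp (-1*0)/1) {0..}"
    by (rule has_integral_exp_minus_to_infinity) simp
  hence h: "((\<lambda>x::real. exp (-x)) has_integral 1) {0..}" by simp
  have p: "(\<integral>\<^sup>+x. ennreal (indicator {0..} x * exp (-x)) \<partial>lborel) = ennreal 1"
    using nn_integral_has_integral_lebesgue[OF _ h] by simp
  have n: "(\<integral>\<^sup>+x. ennreal (indicator {0..} (-x) * exp x) \<partial>lborel) = ennreal 1"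
  proof -
    have "(\<integral>\<^sup>+x. ennreal (indicator {0..} x * exp (-x)) \<partial>lborel)
        = ennreal \<bar>-1\<bar> * (\<integral>\<^sup>+x. ennreal (indicator {0..} (0 + -1 * x) * exp (-(0 + -1*x))) \<partial>lborel)"
      by (rule nn_integral_real_affine) auto
    thus ?thesis using p by simp
  qed
  have "(\<integral>\<^sup>+u. ennreal (norm (exp (- \<bar>u::real\<bar>))) \<partial>lborel)
      \<le> (\<integral>\<^sup>+x. ennreal (indicator {0..} x * exp (-x)) + ennreal (indicator {0..} (-x) * exp x) \<partial>lborel)"
  proof (rule nn_integral_mono)
    fix u :: real
    show "ennreal (norm (exp (- \<bar>u\<bar>))) \<le> ennreal (indicator {0..} u * exp (-u)) + ennreal (indicator {0..} (-u) * exp u)"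
    proof (cases "u \<ge> 0")
      case True then show ?thesis by (simp add: indicator_def)
    next
      case False then show ?thesis by (simp add: indicator_def)
    qed
  qed
  also have "\<dots> = ennreal 1 + ennreal 1"
    by (subst nn_integral_add) (auto simp: p n)
  finally have "(\<integral>\<^sup>+u. ennreal (norm (exp (- \<bar>u::real\<bar>))) \<partial>lborel) < \<infinity>"
    using le_less_trans by fastforce
  thus ?thesis by (intro integrableI_bounded) auto
qed

lemma exp_abs_scaled:
  fixes s :: real assumes s: "s > 0"
  shows "integrable lborel (\<lambda>z. exp (-(s*\<bar>z\<bar>)))"
    and "(\<integral>z. exp (-(s*\<bar>z\<bar>)) \<partial>lborel) = C0 / s"
proof -
  have eq: "(\<lambda>x. exp (-(s*\<bar>0 + 1/s*x\<bar>))) = (\<lambda>x. exp (- \<bar>x\<bar>))"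
    using s by (auto simp: abs_mult)
  have "integrable lborel (\<lambda>x. exp (-(s*\<bar>0 + 1/s*x\<bar>))) = integrable lborel (\<lambda>z. exp (-(s*\<bar>z\<bar>)))"
    using s by (intro lborel_integrable_real_affine_iff) simp
  thus "integrable lborel (\<lambda>z. exp (-(s*\<bar>z\<bar>)))" using integrable_exp_abs eq by simp
  have "(\<integral>z. exp (-(s*\<bar>z\<bar>)) \<partial>lborel) = \<bar>1/s\<bar> *\<^sub>R (\<integral>x. exp (-(s*\<bar>0 + 1/s*x\<bar>)) \<partial>lborel)"
    using s by (intro lborel_integral_real_affine) simp
  also have "\<dots> = C0 / s" using s by (simp add: eq C0_def)
  finally show "(\<integral>z. exp (-(s*\<bar>z\<bar>)) \<partial>lborel) = C0 / s" .
qed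

lemma stable_decay:
  fixes t \<alpha> z :: real assumes t: "t > 0" and a1: "1 \<le> \<alpha>"
  shows "exp (-(t * \<bar>z\<bar> powr \<alpha>)) \<le> exp 1 * exp (-(t powr (1/\<alpha>) * \<bar>z\<bar>))"
proof -
  define s where "s = t powr (1/\<alpha>)"
  have s0: "s > 0" using t by (simp add: s_def)
  have key: "t * \<bar>z\<bar> powr \<alpha> = (s * \<bar>z\<bar>) powr \<alpha>"
  proof -
    have "(s * \<bar>z\<bar>) powr \<alpha> = s powr \<alpha> * \<bar>z\<bar> powr \<alpha>" using s0 by (simp add: powr_mult)
    also have "s powr \<alpha> = t" unfolding s_def using a1 t by (simp add: powr_powr)
    finally show ?thesis by simp
  qed
  show ?thesis
  proof (cases "s * \<bar>z\<bar> \<le> 1")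
    case True
    have "exp (-(t * \<bar>z\<bar> powr \<alpha>)) \<le> 1" using t by simp
    also have "(1::real) = exp 1 * exp (-1)" using exp_add[of "1::real" "-1"] by simp
    also have "\<dots> \<le> exp 1 * exp (-(s * \<bar>z\<bar>))" using True by simp
    finally show ?thesis by (simp add: s_def)
  next
    case False
    hence "s * \<bar>z\<bar> \<ge> 1" by simp
    hence "(s * \<bar>z\<bar>) powr 1 \<le> (s * \<bar>z\<bar>) powr \<alpha>" using a1 by (intro powr_mono) auto
    hence "s * \<bar>z\<bar> \<le> t * \<bar>z\<bar> powr \<alpha>" using key \<open>s * \<bar>z\<bar> \<ge> 1\<close> by simp
    hence "exp (-(t * \<bar>z\<bar> powr \<alpha>)) \<le> exp (-(s * \<bar>z\<bar>))" by simp
    also have "\<dots> \<le> exp 1 * exp (-(s * \<bar>z\<bar>))" by simp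
    finally show ?thesis by (simp add: s_def)
  qed
qed

lemma one_minus_exp_bound: "\<bar>1 - exp (-(w::real))\<bar> \<le> \<bar>w\<bar> * exp \<bar>w\<bar>"
proof (cases "w \<ge> 0")
  case True
  have "1 - w \<le> exp (-w)" using exp_ge_add_one_self[of "-w"] by simp
  moreover have "exp (-w) \<le> 1" using True by simp
  moreover have "w \<le> w * exp w" using True mult_left_mono[of 1 "exp w" w] by simp
  ultimately show ?thesis using True by simp
next
  case False
  have a: "1 - exp (-w) \<le> 0" using False by simp
  have "exp (-w) - 1 \<le> (-w) * exp (-w)"
  proof -
    have "1 + w \<le> exp w" by (rule exp_ge_add_one_self)
    hence "exp (-w) * (1 + w) \<le> exp (-w) * exp w" by (intro mult_left_mono) auto
    hence "exp (-w) + exp (-w) * w \<le> 1" by (simp add: exp_minus field_simps)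
    thus ?thesis by (simp add: algebra_simps)
  qed
  thus ?thesis using a False by simp
qed

lemma pointwise_bound:
  fixes \<alpha> m M t x :: real and pt pY :: "real \<Rightarrow> real \<Rightarrow> real" and \<nu>Y \<sigma>p \<sigma>n :: "real measure"
  assumes a1: "1 \<le> \<alpha>" and a2: "\<alpha> < 2"
    and Ht: "is_transition_density (\<lambda>z. complex_of_real (\<bar>z\<bar> powr \<alpha>)) pt"
    and lev: "is_levy_measure \<nu>Y" and sym: "symmetric_measure \<nu>Y"
    and HY: "is_transition_density (levy_exponent \<nu>Y) pY"
    and sp: "sets \<sigma>p = sets borel" and sn: "sets \<sigma>n = sets borel"
    and fp: "finite_measure \<sigma>p" and fn: "finite_measure \<sigma>n"
    and eqA: "\<forall>A\<in>sets borel. emeasure (stable_levy_measure \<alpha>) A + emeasure \<sigma>n A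
                       = emeasure \<nu>Y A + emeasure \<sigma>p A"
    and mdef: "m = measure \<sigma>p UNIV - measure \<sigma>n UNIV"
    and Mdef: "M = measure \<sigma>p UNIV + measure \<sigma>n UNIV"
    and t0: "0 < t" and t1: "t \<le> 1"
  shows "\<bar>pt t x - exp (- 2 * m * t) * pY t x\<bar> \<le> (2*M*exp (2*M)*exp 1*C0/(2*pi)) * t powr (1 - 1/\<alpha>)"
proof -
  have a0: "0 < \<alpha>" using a1 by simp
  have pt: "continuous_on UNIV (pt t)" "integrable lborel (pt t)"
     "\<And>z. (\<integral>y. cis (z * y) * complex_of_real (pt t y) \<partial>lborel) = exp (- complex_of_real t * complex_of_real (\<bar>z\<bar> powr \<alpha>))"
    using Ht t0 unfolding is_transition_density_def by auto
  have pY: "continuous_on UNIV (pY t)" "integrable lborel (pY t)"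
     "\<And>z. (\<integral>y. cis (z * y) * complex_of_real (pY t y) \<partial>lborel) = exp (- complex_of_real t * levy_exponent \<nu>Y z)"
    using HY t0 unfolding is_transition_density_def by auto
  define c where "c = exp (- 2 * m * t)"
  define f where "f = (\<lambda>y. pt t y - c * pY t y)"
  define F where "F = (\<lambda>z. exp (- complex_of_real t * complex_of_real (\<bar>z\<bar> powr \<alpha>)) - complex_of_real c * exp (- complex_of_real t * levy_exponent \<nu>Y z))"
  have fc: "continuous_on UNIV f" unfolding f_def using pt(1) pY(1) by (intro continuous_intros)
  have fi: "integrable lborel f" unfolding f_def using pt(2) pY(2) by (intro Bochner_Integration.integrable_diff integrable_mult_right)
  have ptm[measurable]: "pt t \<in> borel_measurable lborel" using pt(2) by (rule borel_measurable_integrable)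
  have pYm[measurable]: "pY t \<in> borel_measurable lborel" using pY(2) by (rule borel_measurable_integrable)
  have ci: "integrable lborel (\<lambda>y. cis (z * y) * complex_of_real (g y))" if g: "integrable lborel g" and gm: "g \<in> borel_measurable lborel" for g z
  proof (rule Bochner_Integration.integrable_bound[OF integrable_of_real[OF integrable_abs[OF g], where 'a=complex]])
    show "(\<lambda>y. cis (z * y) * complex_of_real (g y)) \<in> borel_measurable lborel" using gm by measurable
  qed (simp add: norm_mult)
  have FT: "(\<integral>y. cis (z*y) * complex_of_real (f y) \<partial>lborel) = F z" for z
  proof -
    have "(\<lambda>y. cis (z*y) * complex_of_real (f y)) = (\<lambda>y. cis (z*y) * complex_of_real (pt t y) - complex_of_real c * (cis (z*y) * complex_of_real (pY t y)))"
      by (auto simp: f_def algebra_simps)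
    hence "(\<integral>y. cis (z*y) * complex_of_real (f y) \<partial>lborel)
        = (\<integral>y. cis (z*y) * complex_of_real (pt t y) \<partial>lborel) - complex_of_real c * (\<integral>y. cis (z*y) * complex_of_real (pY t y) \<partial>lborel)"
      using ci[OF pt(2) ptm, of z] ci[OF pY(2) pYm, of z]
      by (simp add: Bochner_Integration.integral_diff integral_mult_right_zero)
    thus ?thesis unfolding F_def using pt(3) pY(3) by simp
  qed
  define P where "P = measure \<sigma>p UNIV"
  define N where "N = measure \<sigma>n UNIV"
  have P0: "0 \<le> P" and N0: "0 \<le> N" by (simp_all add: P_def N_def)
  have M0: "0 \<le> M" using P0 N0 by (simp add: Mdef P_def N_def)
  define s where "s = t powr (1/\<alpha>)"
  have s0: "s > 0" using t0 by (simp add: s_def)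
  define G where "G = (\<lambda>z. (2*M*t*exp (2*M)) * (exp 1 * exp (-(s*\<bar>z\<bar>))))"
  have bG: "norm (F z) \<le> G z" for z
  proof -
    obtain Gp Gn where L: "levy_exponent \<nu>Y z = complex_of_real (\<bar>z\<bar> powr \<alpha> + Gn - Gp)"
      and Gp: "0 \<le> Gp" "Gp \<le> 2 * P" and Gn: "0 \<le> Gn" "Gn \<le> 2 * N"
      using levy_exponent_Y[OF a0 a2 lev sym sp sn fp fn eqA, of z] unfolding P_def N_def by blast
    define a where "a = \<bar>z\<bar> powr \<alpha>"
    define w where "w = t * (2*m + Gn - Gp)"
    have "F z = complex_of_real (exp (-(t*a)) - c * exp (-(t*(a + Gn - Gp))))"
      unfolding F_def L a_def by (simp add: exp_of_real[symmetric])
    also have "exp (-(t*a)) - c * exp (-(t*(a + Gn - Gp))) = exp (-(t*a)) * (1 - exp (-w))"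
    proof -
      have "c * exp (-(t*(a + Gn - Gp))) = exp (-(t*a)) * exp (-w)"
        unfolding c_def w_def by (simp add: exp_add[symmetric] algebra_simps)
      thus ?thesis by (simp add: algebra_simps)
    qed
    finally have Fz0: "F z = complex_of_real (exp (-(t*a)) * (1 - exp (-w)))" .
    have "norm (F z) = \<bar>exp (-(t*a)) * (1 - exp (-w))\<bar>" unfolding Fz0 by (rule norm_of_real)
    hence Fz: "norm (F z) = exp (-(t*a)) * \<bar>1 - exp (-w)\<bar>" by (simp add: abs_mult)
    have "\<bar>2*m + Gn - Gp\<bar> \<le> 2*M" using Gp Gn unfolding mdef Mdef P_def[symmetric] N_def[symmetric] by (simp add: abs_le_iff)
    hence wb: "\<bar>w\<bar> \<le> 2*M*t" using t0 unfolding w_def by (simp add: abs_mult mult.commute mult_left_mono)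
    have "2*M*t \<le> 2*M*1" using t1 M0 by (intro mult_left_mono) auto
    hence wb1: "\<bar>w\<bar> \<le> 2*M" using wb by linarith
    have "\<bar>1 - exp (-w)\<bar> \<le> \<bar>w\<bar> * exp \<bar>w\<bar>" by (rule one_minus_exp_bound)
    also have "\<dots> \<le> (2*M*t) * exp (2*M)" using wb wb1 by (intro mult_mono) auto
    finally have e1: "\<bar>1 - exp (-w)\<bar> \<le> 2*M*t*exp (2*M)" .
    have e2: "exp (-(t*a)) \<le> exp 1 * exp (-(s*\<bar>z\<bar>))" unfolding a_def s_def by (rule stable_decay[OF t0 a1])
    have "norm (F z) \<le> (exp 1 * exp (-(s*\<bar>z\<bar>))) * (2*M*t*exp (2*M))"
      unfolding Fz by (intro mult_mono e1 e2) auto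
    thus ?thesis by (simp add: G_def mult_ac)
  qed
  have iG: "integrable lborel G" unfolding G_def
    using exp_abs_scaled(1)[OF s0] by (intro integrable_mult_right)
  have IG: "(\<integral>z. G z \<partial>lborel) = (2*M*t*exp (2*M)) * (exp 1 * (C0 / s))"
    unfolding G_def by (simp add: exp_abs_scaled(2)[OF s0])
  have "\<bar>f x\<bar> \<le> (\<integral>z. G z \<partial>lborel) / (2*pi)" by (rule fourier_bound[OF fc fi FT iG bG])
  also have "(\<integral>z. G z \<partial>lborel) / (2*pi) = (2*M*exp (2*M)*exp 1*C0/(2*pi)) * (t / s)"
    unfolding IG by (simp add: field_simps)
  also have "t / s = t powr (1 - 1/\<alpha>)"
    unfolding s_def using t0 by (simp add: powr_diff)
  finally show ?thesis by (simp add: f_def c_def)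
qed

theorem mainTheorem9:
  fixes \<alpha> m M :: real
  assumes "1 \<le> \<alpha>" and "\<alpha> < 2"
  shows "\<exists>C::real. \<forall>(pt :: real \<Rightarrow> real \<Rightarrow> real) (\<nu>Y :: real measure) (pY :: real \<Rightarrow> real \<Rightarrow> real)
            (\<sigma>p :: real measure) (\<sigma>n :: real measure) (t0 :: real) (x :: real).
     is_transition_density (\<lambda>z. complex_of_real (\<bar>z\<bar> powr \<alpha>)) pt \<longrightarrow>
     is_levy_measure \<nu>Y \<longrightarrow> symmetric_measure \<nu>Y \<longrightarrow>
     is_transition_density (levy_exponent \<nu>Y) pY \<longrightarrow>
     sets \<sigma>p = sets borel \<longrightarrow> sets \<sigma>n = sets borel \<longrightarrow>
     finite_measure \<sigma>p \<longrightarrow> finite_measure \<sigma>n \<longrightarrow>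
     (\<exists>S\<in>sets borel. emeasure \<sigma>p (- S) = 0 \<and> emeasure \<sigma>n S = 0) \<longrightarrow>
     (\<forall>A\<in>sets borel. emeasure (stable_levy_measure \<alpha>) A + emeasure \<sigma>n A
                       = emeasure \<nu>Y A + emeasure \<sigma>p A) \<longrightarrow>
     m = measure \<sigma>p UNIV - measure \<sigma>n UNIV \<longrightarrow>
     M = measure \<sigma>p UNIV + measure \<sigma>n UNIV \<longrightarrow>
     0 < t0 \<longrightarrow> t0 \<le> 1 \<longrightarrow>
     (\<integral>\<^sup>+ t\<in>{0<..t0}. ennreal \<bar>pt t x - exp (- 2 * m * t) * pY t x\<bar> \<partial>lborel)
        \<le> ennreal (C * t0 powr (2 - 1 / \<alpha>))"
proof -
  define C where "C = 2*M*exp (2*M)*exp 1*C0/(2*pi)"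
  show ?thesis
  proof (rule exI[of _ C], intro allI impI)
    fix pt pY :: "real \<Rightarrow> real \<Rightarrow> real" and \<nu>Y \<sigma>p \<sigma>n :: "real measure" and t0 x :: real
    assume Ht: "is_transition_density (\<lambda>z. complex_of_real (\<bar>z\<bar> powr \<alpha>)) pt"
      and lev: "is_levy_measure \<nu>Y" and sym: "symmetric_measure \<nu>Y"
      and HY: "is_transition_density (levy_exponent \<nu>Y) pY"
      and sp: "sets \<sigma>p = sets borel" and sn: "sets \<sigma>n = sets borel"
      and fp: "finite_measure \<sigma>p" and fn: "finite_measure \<sigma>n"
      and "\<exists>S\<in>sets borel. emeasure \<sigma>p (- S) = 0 \<and> emeasure \<sigma>n S = 0"
      and eqA: "\<forall>A\<in>sets borel. emeasure (stable_levy_measure \<alpha>) A + emeasure \<sigma>n A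
                       = emeasure \<nu>Y A + emeasure \<sigma>p A"
      and mdef: "m = measure \<sigma>p UNIV - measure \<sigma>n UNIV"
      and Mdef: "M = measure \<sigma>p UNIV + measure \<sigma>n UNIV"
      and tp: "0 < t0" and t1: "t0 \<le> 1"
    have M0: "0 \<le> M" unfolding Mdef by simp
    have C00: "0 \<le> C0" unfolding C0_def by (intro integral_nonneg_AE) auto
    have C0': "0 \<le> C" unfolding C_def using M0 C00 by simp
    have ex: "0 \<le> 1 - 1/\<alpha>" using assms(1) by (simp add: field_simps)
    have "(\<integral>\<^sup>+ t\<in>{0<..t0}. ennreal \<bar>pt t x - exp (- 2 * m * t) * pY t x\<bar> \<partial>lborel)
        \<le> (\<integral>\<^sup>+ t. ennreal (C * t0 powr (1 - 1/\<alpha>)) * indicator {0<..t0} t \<partial>lborel)"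
    proof (rule nn_integral_mono)
      fix t :: real
      show "ennreal \<bar>pt t x - exp (- 2 * m * t) * pY t x\<bar> * indicator {0<..t0} t
          \<le> ennreal (C * t0 powr (1 - 1/\<alpha>)) * indicator {0<..t0} t"
      proof (cases "t \<in> {0<..t0}")
        case True
        hence t: "0 < t" "t \<le> t0" by auto
        have "\<bar>pt t x - exp (- 2 * m * t) * pY t x\<bar> \<le> C * t powr (1 - 1/\<alpha>)"
          unfolding C_def
          by (rule pointwise_bound[OF assms(1,2) Ht lev sym HY sp sn fp fn eqA mdef Mdef t(1)]) (use t t1 in simp)
        also have "\<dots> \<le> C * t0 powr (1 - 1/\<alpha>)"
          using t C0' ex by (intro mult_left_mono powr_mono2) auto
        finally show ?thesis using True by (simp add: ennreal_leI)
      next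
        case False
        then show ?thesis by simp
      qed
    qed
    also have "\<dots> = ennreal (C * t0 powr (1 - 1/\<alpha>)) * emeasure lborel {0<..t0}"
      by (rule nn_integral_cmult_indicator) simp
    also have "\<dots> = ennreal (C * t0 powr (1 - 1/\<alpha>) * t0)"
      using tp C0' by (simp add: ennreal_mult'[symmetric])
    also have "C * t0 powr (1 - 1/\<alpha>) * t0 = C * t0 powr (2 - 1/\<alpha>)"
    proof -
      have "t0 powr (1 - 1/\<alpha>) * t0 = t0 powr (1 - 1/\<alpha>) * t0 powr 1" using tp by simp
      also have "\<dots> = t0 powr (1 - 1/\<alpha> + 1)" by (simp only: powr_add[symmetric])
      also have "1 - 1/\<alpha> + 1 = 2 - 1/\<alpha>" by simp
      finally show ?thesis by (simp add: mult.assoc)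
    qed
    finally show "(\<integral>\<^sup>+ t\<in>{0<..t0}. ennreal \<bar>pt t x - exp (- 2 * m * t) * pY t x\<bar> \<partial>lborel)
        \<le> ennreal (C * t0 powr (2 - 1 / \<alpha>))" .
  qed
qed

end
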